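(* There is a universal constant $C$ such that for every $T$ and every sequence of outcomes $\mathbf x\in\{0,1\}^T$ fixed in advance, the forecasts $\mathbf p$ produced by the algorithm ForecastHedge satisfy $\mathbb E[\mathrm{VCal}(\mathbf p,\mathbf x)]\le C\sqrt T$, i.e. $\mathbb E[\mathrm{VCal}(\mathbf p,\mathbf x)]=O(\sqrt T)$.
   Context: ForecastHedge: let $S(z)=e^z/(e^z+e^{-z})$ and $\eta=1/\sqrt T$. Predict $p_1=1/2$. For $t=2,\dots,T$, let $\hat x_{t-1}=\frac1{t-1}\sum_{s=1}^{t-1}x_s$ and sample $p_t\in[0,1]$ (independently of previous randomness) from the distribution with $\Pr[p_t\le v]=S(\eta(t-1)(v-\hat x_{t-1}))$ for all $v\in[0,1)$ (and $\Pr[p_t\le 1]=1$); then observe $x_t$. For $\beta=\frac1T\sum_tx_t$ and a scoring rule $\ell:[0,1]\times\{0,1\}\to\mathbb R$, $\mathrm{Reg}_\ell(\mathbf p,\mathbf x)=\sum_t\ell(p_t,x_t)-\sum_t\ell(\beta,x_t)$. For $v\in[0,1]$, the V-shaped scoring rule is $\ell_v(p,0)=v\,\mathrm{sgn}(p-v)$, $\ell_v(p,1)=(1-v)\,\mathrm{sgn}(v-p)$ with $\mathrm{sgn}(0)=0$, and $\mathrm{VCal}(\mathbf p,\mathbf x)=\sup_{v\in[0,1]}\mathrm{Reg}_{\ell_v}(\mathbf p,\mathbf x)$. *)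

theory Defs
  imports "HOL-Probability.Probability"
begin

text \<open>Outcomes x t and forecasts p t are indexed by rounds t = 1..T.\<close>

definition S :: "real \<Rightarrow> real" where
  "S z = exp z / (exp z + exp (- z))"

definition eta :: "nat \<Rightarrow> real" where
  "eta T = 1 / sqrt (real T)"

definition xhat :: "(nat \<Rightarrow> real) \<Rightarrow> nat \<Rightarrow> real" where
  "xhat x s = (\<Sum>i=1..s. x i) / real s"

text \<open>CDF of the forecast p_t of ForecastHedge (p_1 = 1/2 deterministically;
  for t >= 2: Pr[p_t <= v] = S(eta (t-1) (v - xhat_{t-1})) for v in [0,1),
  Pr[p_t <= 1] = 1, and p_t in [0,1], so Pr[p_t <= v] = 0 for v < 0).\<close>
definition fh_cdf :: "nat \<Rightarrow> (nat \<Rightarrow> real) \<Rightarrow> nat \<Rightarrow> real \<Rightarrow> real" where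
  "fh_cdf T x t v =
     (if t = 1 then (if v < 1/2 then 0 else 1)
      else if v < 0 then 0
      else if v < 1 then S (eta T * real (t - 1) * (v - xhat x (t - 1)))
      else 1)"

definition fh_dist :: "nat \<Rightarrow> (nat \<Rightarrow> real) \<Rightarrow> nat \<Rightarrow> real measure" where
  "fh_dist T x t = interval_measure (fh_cdf T x t)"

definition fh_measure :: "nat \<Rightarrow> (nat \<Rightarrow> real) \<Rightarrow> (nat \<Rightarrow> real) measure" where
  "fh_measure T x = PiM {1..T} (\<lambda>t. fh_dist T x t)"

text \<open>V-shaped scoring rule; sgn 0 = 0 in Isabelle.\<close>
definition ell_V :: "real \<Rightarrow> real \<Rightarrow> real \<Rightarrow> real" where
  "ell_V v p y = (if y = 1 then (1 - v) * sgn (v - p) else v * sgn (p - v))"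

definition beta :: "nat \<Rightarrow> (nat \<Rightarrow> real) \<Rightarrow> real" where
  "beta T x = (\<Sum>t=1..T. x t) / real T"

definition Reg :: "(real \<Rightarrow> real \<Rightarrow> real) \<Rightarrow> nat \<Rightarrow> (nat \<Rightarrow> real) \<Rightarrow> (nat \<Rightarrow> real) \<Rightarrow> real" where
  "Reg l T p x = (\<Sum>t=1..T. l (p t) (x t)) - (\<Sum>t=1..T. l (beta T x) (x t))"

definition VCal :: "nat \<Rightarrow> (nat \<Rightarrow> real) \<Rightarrow> (nat \<Rightarrow> real) \<Rightarrow> real" where
  "VCal T p x = (SUP v\<in>{0..1}. Reg (ell_V v) T p x)"

end

theory Submission
  imports Defs "HOL-Probability.Probability"
begin

lemma one_exp_pos: "0 < 1 + exp (y::real)"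
  by (simp add: add_pos_pos)

lemma S_alt: "S z = 1 / (1 + exp (-2*z))"
proof -
  have "exp z / (exp z + exp (- z)) = 1 / (1 + exp (-z) / exp z)"
    by (simp add: field_simps add_pos_pos)
  also have "exp (-z) / exp z = exp (-2*z)" by (simp add: exp_diff[symmetric])
  finally show ?thesis unfolding S_def .
qed

lemma S_pos: "0 < S z" unfolding S_alt using one_exp_pos by simp
lemma S_lt1: "S z < 1" unfolding S_alt using one_exp_pos[of "-2*z"] by (simp add: divide_less_eq)
lemma S_nonneg: "0 \<le> S z" using S_pos[of z] by simp
lemma S_le1: "S z \<le> 1" using S_lt1[of z] by simp

lemma S_mono: "z \<le> w \<Longrightarrow> S z \<le> S w"
  unfolding S_alt by (rule divide_left_mono) (auto intro!: mult_pos_pos one_exp_pos)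

lemma S_strict_mono: "z < w \<Longrightarrow> S z < S w"
  unfolding S_alt by (rule divide_strict_left_mono) (auto intro!: mult_pos_pos one_exp_pos)

lemma S_cont: "continuous_on A S"
  unfolding S_alt by (intro continuous_intros) (metis one_exp_pos less_irrefl)

lemma isCont_S: "isCont S z"
  using S_cont[of UNIV] by (simp add: continuous_on_eq_continuous_at)

lemma S_neg: "S (- z) = 1 - S z"
proof -
  have p: "exp z + exp (-z) > 0" by (simp add: add_pos_pos)
  show ?thesis unfolding S_def using p by (simp add: field_simps)
qed


lemma cont_right_ev:
  fixes F g :: "real \<Rightarrow> real"
  assumes "\<forall>\<^sub>F y in at_right a. F y = g y" "F a = g a" "continuous (at_right a) g"
  shows "continuous (at_right a) F"
  using assms unfolding continuous_within
  by (metis (mono_tags, lifting) tendsto_cong)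

lemma lim_left_ev:
  fixes F g :: "real \<Rightarrow> real"
  assumes "\<forall>\<^sub>F y in at_left a. F y = g y" "(g \<longlongrightarrow> l) (at_left a)"
  shows "(F \<longlongrightarrow> l) (at_left a)"
  using assms by (metis (mono_tags, lifting) tendsto_cong)

definition pw :: "(real \<Rightarrow> real) \<Rightarrow> real \<Rightarrow> real" where
  "pw g v = (if v < 0 then 0 else if v < 1 then g v else 1)"
definition pwm :: "(real \<Rightarrow> real) \<Rightarrow> real \<Rightarrow> real" where
  "pwm g v = (if v \<le> 0 then 0 else if v \<le> 1 then g v else 1)"

locale pwg =
  fixes g :: "real \<Rightarrow> real"
  assumes g_mono: "\<And>a b. a \<le> b \<Longrightarrow> g a \<le> g b"
    and g_cont: "\<And>a. isCont g a"
    and g_nonneg: "\<And>a. 0 \<le> g a" and g_le1: "\<And>a. g a \<le> 1"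
begin

lemma pw_mono: "a \<le> b \<Longrightarrow> pw g a \<le> pw g b"
  using g_mono[of a b] g_nonneg[of a] g_le1[of b] g_nonneg[of b] g_le1[of a]
  unfolding pw_def by auto

lemma pw_rcont: "continuous (at_right a) (pw g)"
proof -
  consider "a < 0" | "0 \<le> a" "a < 1" | "1 \<le> a" by linarith
  then show ?thesis
  proof cases
    case 1
    have "\<forall>\<^sub>F y in at_right a. pw g y = 0"
      unfolding eventually_at_right_field using 1 by (intro exI[of _ 0]) (auto simp: pw_def)
    then show ?thesis by (rule cont_right_ev) (use 1 in \<open>auto simp: pw_def\<close>)
  next
    case 2
    have "\<forall>\<^sub>F y in at_right a. pw g y = g y"
      unfolding eventually_at_right_field using 2 by (intro exI[of _ 1]) (auto simp: pw_def)
    then show ?thesis by (rule cont_right_ev)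
        (use 2 g_cont in \<open>auto simp: pw_def intro: continuous_at_imp_continuous_within\<close>)
  next
    case 3
    have "\<forall>\<^sub>F y in at_right a. pw g y = 1"
      unfolding eventually_at_right_field using 3 by (intro exI[of _ "a+1"]) (auto simp: pw_def)
    then show ?thesis by (rule cont_right_ev) (use 3 in \<open>auto simp: pw_def\<close>)
  qed
qed

lemma pw_left: "(pw g \<longlongrightarrow> pwm g a) (at_left a)"
proof -
  consider "a \<le> 0" | "0 < a" "a \<le> 1" | "1 < a" by linarith
  then show ?thesis
  proof cases
    case 1
    have "\<forall>\<^sub>F y in at_left a. pw g y = 0"
      unfolding eventually_at_left_field using 1 by (intro exI[of _ "a - 1"]) (auto simp: pw_def)
    then show ?thesis by (rule lim_left_ev) (use 1 in \<open>auto simp: pwm_def\<close>)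
  next
    case 2
    have "\<forall>\<^sub>F y in at_left a. pw g y = g y"
      unfolding eventually_at_left_field using 2 by (intro exI[of _ 0]) (auto simp: pw_def)
    moreover have "(g \<longlongrightarrow> g a) (at_left a)"
      using g_cont[of a] by (simp add: isCont_def filterlim_at_split)
    ultimately have "(pw g \<longlongrightarrow> g a) (at_left a)" by (rule lim_left_ev)
    then show ?thesis using 2 by (simp add: pwm_def)
  next
    case 3
    have "\<forall>\<^sub>F y in at_left a. pw g y = 1"
      unfolding eventually_at_left_field using 3 by (intro exI[of _ 1]) (auto simp: pw_def)
    then show ?thesis by (rule lim_left_ev) (use 3 in \<open>auto simp: pwm_def\<close>)
  qed
qed

lemma pw_bot: "(pw g \<longlongrightarrow> 0) at_bot"
proof -
  have "\<forall>\<^sub>F y in at_bot. pw g y = 0" unfolding eventually_at_bot_linorder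
    by (intro exI[of _ "-1"]) (auto simp: pw_def)
  then show ?thesis by (rule tendsto_eventually[OF eventually_mono]) auto
qed

lemma pw_top: "(pw g \<longlongrightarrow> 1) at_top"
proof -
  have "\<forall>\<^sub>F y in at_top. pw g y = 1" unfolding eventually_at_top_linorder
    by (intro exI[of _ "1"]) (auto simp: pw_def)
  then show ?thesis by (rule tendsto_eventually[OF eventually_mono]) auto
qed

end


definition gS :: "nat \<Rightarrow> (nat \<Rightarrow> real) \<Rightarrow> nat \<Rightarrow> real \<Rightarrow> real" where
  "gS T x t v = S (eta T * real (t - 1) * (v - xhat x (t - 1)))"

lemma eta_nonneg: "0 \<le> eta T" unfolding eta_def by simp

lemma pwg_gS: "pwg (gS T x t)"
proof
  fix a b :: real assume "a \<le> b"
  then show "gS T x t a \<le> gS T x t b" unfolding gS_def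
    by (intro S_mono mult_left_mono) (auto simp: eta_nonneg)
next
  fix a show "isCont (gS T x t) a" unfolding gS_def
    by (rule continuous_at_compose[OF _ isCont_S, unfolded o_def]) (intro continuous_intros)
qed (auto simp: gS_def S_nonneg S_le1)

definition fh_cdfm :: "nat \<Rightarrow> (nat \<Rightarrow> real) \<Rightarrow> nat \<Rightarrow> real \<Rightarrow> real" where
  "fh_cdfm T x t v = (if t = 1 then (if v \<le> 1/2 then 0 else 1) else pwm (gS T x t) v)"

lemma fh_cdf_pw: "t \<noteq> 1 \<Longrightarrow> fh_cdf T x t = pw (gS T x t)"
  unfolding fh_cdf_def pw_def gS_def by (auto simp: fun_eq_iff)

definition step :: "real \<Rightarrow> real" where "step v = (if v < 1/2 then 0 else 1)"

lemma fh_cdf_1: "fh_cdf T x 1 = step"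
  unfolding fh_cdf_def step_def by (auto simp: fun_eq_iff)

lemma fh_cdf_1': "fh_cdf T x (Suc 0) = step"
  using fh_cdf_1 by simp

lemma step_props:
  shows "a \<le> b \<Longrightarrow> step a \<le> step b"
    and "continuous (at_right a) step"
    and "(step \<longlongrightarrow> (if a \<le> 1/2 then 0 else 1)) (at_left a)"
    and "(step \<longlongrightarrow> 0) at_bot" and "(step \<longlongrightarrow> 1) at_top"
proof -
  show "a \<le> b \<Longrightarrow> step a \<le> step b" unfolding step_def by auto
  show "continuous (at_right a) step"
  proof (cases "a < 1/2")
    case True
    have "\<forall>\<^sub>F y in at_right a. step y = 0"
      unfolding eventually_at_right_field using True by (intro exI[of _ "1/2"]) (auto simp: step_def)
    then show ?thesis by (rule cont_right_ev) (use True in \<open>auto simp: step_def\<close>)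
  next
    case False
    have "\<forall>\<^sub>F y in at_right a. step y = 1"
      unfolding eventually_at_right_field using False by (intro exI[of _ "a+1"]) (auto simp: step_def)
    then show ?thesis by (rule cont_right_ev) (use False in \<open>auto simp: step_def\<close>)
  qed
  show "(step \<longlongrightarrow> (if a \<le> 1/2 then 0 else 1)) (at_left a)"
  proof (cases "a \<le> 1/2")
    case True
    have "\<forall>\<^sub>F y in at_left a. step y = 0"
      unfolding eventually_at_left_field using True by (intro exI[of _ "a - 1"]) (auto simp: step_def)
    then show ?thesis by (rule lim_left_ev) (use True in \<open>auto\<close>)
  next
    case False
    have "\<forall>\<^sub>F y in at_left a. step y = 1"
      unfolding eventually_at_left_field using False by (intro exI[of _ "1/2"]) (auto simp: step_def)
    then show ?thesis by (rule lim_left_ev) (use False in \<open>auto\<close>)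
  qed
  have "\<forall>\<^sub>F y in at_bot. step y = 0" unfolding eventually_at_bot_linorder
    by (intro exI[of _ "0"]) (auto simp: step_def)
  then show "(step \<longlongrightarrow> 0) at_bot" by (rule tendsto_eventually[OF eventually_mono]) auto
  have "\<forall>\<^sub>F y in at_top. step y = 1" unfolding eventually_at_top_linorder
    by (intro exI[of _ "1"]) (auto simp: step_def)
  then show "(step \<longlongrightarrow> 1) at_top" by (rule tendsto_eventually[OF eventually_mono]) auto
qed

lemma fh_cdf_props:
  shows "a \<le> b \<Longrightarrow> fh_cdf T x t a \<le> fh_cdf T x t b"
    and "continuous (at_right a) (fh_cdf T x t)"
    and "(fh_cdf T x t \<longlongrightarrow> fh_cdfm T x t a) (at_left a)"
    and "(fh_cdf T x t \<longlongrightarrow> 0) at_bot" and "(fh_cdf T x t \<longlongrightarrow> 1) at_top"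
proof -
  interpret pwg "gS T x t" by (rule pwg_gS)
  show "a \<le> b \<Longrightarrow> fh_cdf T x t a \<le> fh_cdf T x t b"
    by (cases "t = 1") (auto simp: fh_cdf_1 fh_cdf_1' step_props fh_cdf_pw pw_mono)
  show "continuous (at_right a) (fh_cdf T x t)"
    by (cases "t = 1") (auto simp: fh_cdf_1 fh_cdf_1' step_props fh_cdf_pw pw_rcont)
  show "(fh_cdf T x t \<longlongrightarrow> fh_cdfm T x t a) (at_left a)"
    using step_props(3)[of a]
    by (cases "t = 1") (auto simp: fh_cdf_1 fh_cdf_1' fh_cdfm_def fh_cdf_pw pw_left)
  show "(fh_cdf T x t \<longlongrightarrow> 0) at_bot"
    by (cases "t = 1") (auto simp: fh_cdf_1 fh_cdf_1' step_props fh_cdf_pw pw_bot)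
  show "(fh_cdf T x t \<longlongrightarrow> 1) at_top"
    by (cases "t = 1") (auto simp: fh_cdf_1 fh_cdf_1' step_props fh_cdf_pw pw_top)
qed

lemma fh_dist_real_distribution: "real_distribution (fh_dist T x t)"
  unfolding fh_dist_def by (rule real_distribution_interval_measure) (auto simp: fh_cdf_props)

lemma fh_dist_prob_space: "prob_space (fh_dist T x t)"
  using fh_dist_real_distribution real_distribution_def by blast

lemma sets_fh_dist[simp, measurable_cong]: "sets (fh_dist T x t) = sets borel"
  using fh_dist_real_distribution real_distribution.events_eq_borel by blast

lemma space_fh_dist[simp]: "space (fh_dist T x t) = UNIV"
  using sets_fh_dist sets_eq_imp_space_eq by fastforce

lemma measure_fh_dist_le: "measure (fh_dist T x t) {..v} = fh_cdf T x t v"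
  unfolding fh_dist_def by (rule measure_interval_measure_Iic) (auto simp: fh_cdf_props)

lemma measure_fh_dist_less: "measure (fh_dist T x t) {..<v} = fh_cdfm T x t v"
proof -
  interpret real_distribution "fh_dist T x t" by (rule fh_dist_real_distribution)
  have "cdf (fh_dist T x t) = fh_cdf T x t"
    unfolding fh_dist_def by (rule cdf_interval_measure) (auto simp: fh_cdf_props)
  then have "(fh_cdf T x t \<longlongrightarrow> measure (fh_dist T x t) {..<v}) (at_left v)"
    using cdf_at_left[of v] by simp
  from tendsto_unique[OF _ this fh_cdf_props(3)] show ?thesis
    by (simp add: trivial_limit_at_left_real)
qed


context prob_space
begin

lemma bnd_integrable:
  fixes f :: "'a \<Rightarrow> real"
  assumes "f \<in> borel_measurable M" "\<And>w. w \<in> space M \<Longrightarrow> \<bar>f w\<bar> \<le> B"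
  shows "integrable M f"
  using assms by (intro integrable_const_bound[where B=B]) auto

lemma indep_sum_single:
  fixes Z :: "'i \<Rightarrow> 'a \<Rightarrow> real"
  assumes ind: "indep_vars (\<lambda>_. borel) Z (insert i I)" and "i \<notin> I"
  shows "indep_var borel (\<lambda>w. (\<Sum>j\<in>I. Z j w) ^ a) borel (\<lambda>w. Z i w ^ b)"
proof -
  have "indep_var (PiM I (\<lambda>_. borel)) (\<lambda>w. restrict (\<lambda>j. Z j w) I)
                  (PiM {i} (\<lambda>_. borel)) (\<lambda>w. restrict (\<lambda>j. Z j w) {i})"
    using assms by (intro indep_var_restrict[OF ind]) auto
  then have "indep_var borel ((\<lambda>f. (\<Sum>j\<in>I. f j) ^ a) \<circ> (\<lambda>w. restrict (\<lambda>j. Z j w) I))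
                  borel ((\<lambda>f. f i ^ b) \<circ> (\<lambda>w. restrict (\<lambda>j. Z j w) {i}))"
    by (rule indep_var_compose) measurable
  moreover have "((\<lambda>f. (\<Sum>j\<in>I. f j) ^ a) \<circ> (\<lambda>w. restrict (\<lambda>j. Z j w) I)) = (\<lambda>w. (\<Sum>j\<in>I. Z j w) ^ a)"
    by (auto simp: fun_eq_iff)
  moreover have "((\<lambda>f. f i ^ b) \<circ> (\<lambda>w. restrict (\<lambda>j. Z j w) {i})) = (\<lambda>w. Z i w ^ b)"
    by (auto simp: fun_eq_iff)
  ultimately show ?thesis by simp
qed

lemma moments_indep:
  fixes Z :: "'i \<Rightarrow> 'a \<Rightarrow> real"
  assumes "finite I" "indep_vars (\<lambda>_. borel) Z I"
    and bnd: "\<And>i w. i \<in> I \<Longrightarrow> w \<in> space M \<Longrightarrow> \<bar>Z i w\<bar> \<le> 1"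
    and cent: "\<And>i. i \<in> I \<Longrightarrow> expectation (Z i) = 0"
  shows "expectation (\<lambda>w. (\<Sum>i\<in>I. Z i w)^2) = (\<Sum>i\<in>I. expectation (\<lambda>w. (Z i w)^2))
    \<and> expectation (\<lambda>w. (\<Sum>i\<in>I. Z i w)^4) \<le> (\<Sum>i\<in>I. expectation (\<lambda>w. (Z i w)^2))
         + 3 * (\<Sum>i\<in>I. expectation (\<lambda>w. (Z i w)^2))^2"
  using assms
proof (induction I rule: finite_induct)
  case empty
  then show ?case by simp
next
  case (insert i I)
  have indI: "indep_vars (\<lambda>_. borel) Z I"
    using insert.prems(1) by (rule indep_vars_subset) auto
  have meas: "\<And>j. j \<in> insert i I \<Longrightarrow> Z j \<in> borel_measurable M"
    using insert.prems(1) unfolding indep_vars_def by auto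
  note IH = insert.IH[OF indI insert.prems(2) insert.prems(3)]
  define S where "S = (\<lambda>w. \<Sum>j\<in>I. Z j w)"
  define V where "V = (\<Sum>j\<in>I. expectation (\<lambda>w. (Z j w)^2))"
  define q where "q = expectation (\<lambda>w. (Z i w)^2)"
  have Smeas: "S \<in> borel_measurable M" unfolding S_def using meas by auto
  have Sb: "\<bar>S w\<bar> \<le> real (card I)" if "w \<in> space M" for w
  proof -
    have "\<bar>S w\<bar> \<le> (\<Sum>j\<in>I. \<bar>Z j w\<bar>)" unfolding S_def by (rule sum_abs)
    also have "\<dots> \<le> (\<Sum>j\<in>I. 1)" using insert.prems(2) that by (intro sum_mono) auto
    finally show ?thesis by simp
  qed
  have Zb: "\<bar>Z i w\<bar> \<le> 1" if "w \<in> space M" for w using insert.prems(2) that by auto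
  have intS: "integrable M (\<lambda>w. S w ^ a)" for a
  proof (rule bnd_integrable[where B="real (card I) ^ a"])
    show "(\<lambda>w. S w ^ a) \<in> borel_measurable M" using Smeas by measurable
    fix w assume "w \<in> space M"
    then show "\<bar>S w ^ a\<bar> \<le> real (card I) ^ a"
      unfolding power_abs by (intro power_mono Sb) auto
  qed
  have intZ: "integrable M (\<lambda>w. Z i w ^ a)" for a
  proof (rule bnd_integrable[where B="1"])
    show "(\<lambda>w. Z i w ^ a) \<in> borel_measurable M" using meas by measurable
    fix w assume "w \<in> space M"
    then show "\<bar>Z i w ^ a\<bar> \<le> 1"
      unfolding power_abs using Zb by (simp add: power_le_one)
  qed
  have prod: "expectation (\<lambda>w. S w ^ a * Z i w ^ b) = expectation (\<lambda>w. S w ^ a) * expectation (\<lambda>w. Z i w ^ b)" for a b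
    unfolding S_def
    by (rule indep_var_lebesgue_integral[OF indep_sum_single[OF insert.prems(1) insert.hyps(2)]])
       (use intS intZ in \<open>auto simp: S_def\<close>)
  have intSZ: "integrable M (\<lambda>w. S w ^ a * Z i w ^ b)" for a b
    unfolding S_def
    by (rule indep_var_integrable[OF indep_sum_single[OF insert.prems(1) insert.hyps(2)]])
       (use intS intZ in \<open>auto simp: S_def\<close>)
  have ES: "expectation S = 0"
    unfolding S_def using insert.prems(1,3) meas
    by (subst Bochner_Integration.integral_sum) (auto intro!: bnd_integrable[where B=1] insert.prems(2))
  have EZ: "expectation (Z i) = 0" using insert.prems(3) by auto
  have ES1: "expectation (\<lambda>w. S w ^ 1) = 0" using ES by simp
  have EZ1: "expectation (\<lambda>w. Z i w ^ 1) = 0" using EZ by simp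
  have sumeq: "(\<Sum>j\<in>insert i I. Z j w) = S w + Z i w" for w
    unfolding S_def using insert.hyps by simp
  have q_le: "expectation (\<lambda>w. Z i w ^ 4) \<le> q"
    unfolding q_def
  proof (rule integral_mono[OF intZ intZ])
    fix w assume "w \<in> space M"
    then have "\<bar>Z i w\<bar> \<le> 1" by (rule Zb)
    then have h: "Z i w ^ 2 \<le> 1" by (simp add: abs_square_le_1)
    have "Z i w ^ 4 = Z i w ^ 2 * Z i w ^ 2" by algebra
    also have "\<dots> \<le> Z i w ^ 2" using h by (intro mult_left_le) auto
    finally show "Z i w ^ 4 \<le> Z i w ^ 2" .
  qed
  define P where "P a b = (\<lambda>w. S w ^ a * Z i w ^ b)" for a b
  have intP: "integrable M (P a b)" for a b unfolding P_def by (rule intSZ)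
  have prodP: "expectation (P a b) = expectation (\<lambda>w. S w ^ a) * expectation (\<lambda>w. Z i w ^ b)" for a b
    unfolding P_def by (rule prod)
  have e4: "(\<lambda>w. (S w + Z i w)^4) = (\<lambda>w. P 4 0 w + 4*P 3 1 w
      + 6*P 2 2 w + 4*P 1 3 w + P 0 4 w)"
    unfolding P_def by (rule ext) algebra
  have e2: "(\<lambda>w. (S w + Z i w)^2) = (\<lambda>w. P 2 0 w + 2*P 1 1 w + P 0 2 w)"
    unfolding P_def by (rule ext) algebra
  have E4: "expectation (\<lambda>w. (S w + Z i w)^4) = expectation (P 4 0)
      + 4*expectation (P 3 1) + 6*expectation (P 2 2)
      + 4*expectation (P 1 3) + expectation (P 0 4)"
    unfolding e4 by (simp add: intP Bochner_Integration.integral_add)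
  have E2: "expectation (\<lambda>w. (S w + Z i w)^2) = expectation (P 2 0)
      + 2*expectation (P 1 1) + expectation (P 0 2)"
    unfolding e2 by (simp add: intP Bochner_Integration.integral_add)
  have ES2: "expectation (\<lambda>w. S w ^ 2) = V" and ES4: "expectation (\<lambda>w. S w ^ 4) \<le> V + 3 * V^2"
    using IH unfolding S_def V_def by auto
  have ES0: "expectation (\<lambda>w. S w ^ 0) = 1" "expectation (\<lambda>w. Z i w ^ 0) = 1"
    by (simp_all add: prob_space)
  have qnn: "0 \<le> q" unfolding q_def by simp
  have Vnn: "0 \<le> V" unfolding V_def by (intro sum_nonneg) simp
  have V': "(\<Sum>j\<in>insert i I. expectation (\<lambda>w. (Z j w)^2)) = V + q"
    unfolding V_def q_def using insert.hyps by simp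
  have "expectation (\<lambda>w. (S w + Z i w)^2) = V + q"
    unfolding E2 prodP ES0 ES1 EZ1 ES2 q_def by simp
  moreover have "expectation (\<lambda>w. (S w + Z i w)^4) \<le> (V + q) + 3 * (V + q)^2"
  proof -
    have "expectation (\<lambda>w. (S w + Z i w)^4) = expectation (\<lambda>w. S w ^ 4) + 6 * V * q
        + expectation (\<lambda>w. Z i w ^ 4)"
      unfolding E4 prodP ES0 ES1 EZ1 ES2 q_def by simp
    also have "\<dots> \<le> (V + 3 * V^2) + 6 * V * q + q"
      using ES4 q_le by linarith
    also have "\<dots> \<le> (V + q) + 3 * (V + q)^2"
      using qnn Vnn by (simp add: power2_eq_square algebra_simps)
    finally show ?thesis .
  qed
  ultimately show ?case unfolding sumeq V' by simp
qed


lemma E_root4: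
  fixes f :: "'a \<Rightarrow> real"
  assumes fm: "f \<in> borel_measurable M" and fnn: "\<And>w. w \<in> space M \<Longrightarrow> 0 \<le> f w"
    and fb: "\<And>w. w \<in> space M \<Longrightarrow> f w \<le> K"
    and Ef: "expectation f \<le> B" and Bp: "0 < B"
  shows "expectation (\<lambda>w. sqrt (sqrt (f w))) \<le> sqrt (sqrt B)"
proof -
  define a where "a = sqrt (sqrt B)"
  have ap: "0 < a" unfolding a_def using Bp by simp
  have a4: "a^4 = B" unfolding a_def using Bp
    by (metis less_eq_real_def power2_eq_square power_mult real_sqrt_pow2 real_sqrt_ge_zero num_double numeral_times_numeral)
  have intf: "integrable M f" using fm fnn fb by (intro bnd_integrable[where B=K]) auto
  have ints: "integrable M (\<lambda>w. sqrt (sqrt (f w)))"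
  proof (rule bnd_integrable[where B="sqrt (sqrt K)"])
    show "(\<lambda>w. sqrt (sqrt (f w))) \<in> borel_measurable M" using fm by measurable
    fix w assume "w \<in> space M"
    then show "\<bar>sqrt (sqrt (f w))\<bar> \<le> sqrt (sqrt K)" using fnn fb by simp
  qed
  have young: "sqrt (sqrt (f w)) \<le> 3*a/4 + f w / (4*a^3)" if "w \<in> space M" for w
  proof -
    define y where "y = sqrt (sqrt (f w))"
    have y0: "0 \<le> y" unfolding y_def using fnn[OF that] by simp
    have y4: "y^4 = f w" unfolding y_def using fnn[OF that]
      by (metis power2_eq_square power_mult real_sqrt_pow2 real_sqrt_ge_zero num_double numeral_times_numeral)
    have "4*a^3*y \<le> 3*a^4 + y^4"
    proof -
      have "0 \<le> (y-a)^2 * (y^2 + 2*a*y + 3*a^2)" using y0 ap by (intro mult_nonneg_nonneg) auto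
      then show ?thesis by (simp add: power2_eq_square power3_eq_cube algebra_simps power4_eq_xxxx)
    qed
    then have "y \<le> (3*a^4 + y^4) / (4*a^3)" using ap by (simp add: field_simps)
    also have "\<dots> = 3*a/4 + y^4/(4*a^3)" using ap by (simp add: field_simps power4_eq_xxxx power3_eq_cube)
    finally have "y \<le> 3*a/4 + f w/(4*a^3)" unfolding y4 .
    then show ?thesis by (simp add: y_def)
  qed
  have "expectation (\<lambda>w. sqrt (sqrt (f w))) \<le> expectation (\<lambda>w. 3*a/4 + f w / (4*a^3))"
    by (rule integral_mono[OF ints]) (use intf young in auto)
  also have "\<dots> = 3*a/4 + expectation f / (4*a^3)"
    using intf by (simp add: prob_space)
  also have "\<dots> \<le> 3*a/4 + B / (4*a^3)"
    using Ef ap by (simp add: divide_right_mono)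
  also have "\<dots> = a" using ap a4 by (simp add: field_simps power4_eq_xxxx power3_eq_cube)
  finally show ?thesis unfolding a_def .
qed

end

lemma chain_bound:
  fixes h :: "real \<Rightarrow> real"
  defines "D \<equiv> \<lambda>k. (\<Sum>i\<in>{1..<2^k}. (h (real i / 2^k) - h (real (i - 1) / 2^k))^4)"
  shows "j < 2^K \<Longrightarrow> \<bar>h (real j / 2^K)\<bar> \<le> \<bar>h 0\<bar> + (\<Sum>k\<in>{1..K}. sqrt (sqrt (D k)))"
proof (induction K arbitrary: j)
  case 0
  then show ?case by simp
next
  case (Suc K)
  have Dnn: "0 \<le> D k" for k unfolding D_def by (intro sum_nonneg) simp
  have sumeq: "(\<Sum>k\<in>{1..Suc K}. sqrt (sqrt (D k))) = (\<Sum>k\<in>{1..K}. sqrt (sqrt (D k))) + sqrt (sqrt (D (Suc K)))"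
    by simp
  define j' where "j' = j div 2"
  have j': "j = 2*j' \<or> j = 2*j' + 1" unfolding j'_def by presburger
  have j'lt: "j' < 2^K" using Suc.prems j' by auto
  have half: "real (2*j') / 2^Suc K = real j' / 2^K" by simp
  show ?case
  proof (cases "j = 2*j'")
    case True
    have nn: "0 \<le> sqrt (sqrt (D (Suc K)))" using Dnn[of "Suc K"] by simp
    have "h (real j / 2^Suc K) = h (real j' / 2^K)" using half True by simp
    then show ?thesis unfolding sumeq using Suc.IH[OF j'lt] nn by linarith
  next
    case False
    then have jj: "j = 2*j'+1" using j' by auto
    have jr: "1 \<le> j" "j < 2^Suc K" using jj Suc.prems by auto
    have "(h (real j / 2^Suc K) - h (real (j - 1) / 2^Suc K))^4 \<le> D (Suc K)"
      unfolding D_def by (rule member_le_sum[of j, OF _ _ finite_atLeastLessThan]) (use jr in auto)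
    then have "\<bar>h (real j / 2^Suc K) - h (real (j - 1) / 2^Suc K)\<bar> \<le> sqrt (sqrt (D (Suc K)))"
      by (metis abs_ge_zero power2_abs power2_eq_square power_mult real_le_rsqrt real_sqrt_le_iff num_double numeral_times_numeral)
    moreover have "real (j - 1) / 2^Suc K = real j' / 2^K" using jj by simp
    ultimately show ?thesis using Suc.IH[OF j'lt] sumeq by simp
  qed
qed


lemma fh_measure_prob: "prob_space (fh_measure T x)"
  unfolding fh_measure_def by (intro prob_space_PiM fh_dist_prob_space)

lemma space_fh_measure: "space (fh_measure T x) = PiE {1..T} (\<lambda>_. UNIV)"
  unfolding fh_measure_def by (simp add: space_PiM)

lemma meas_fh_dist_iff: "measurable (fh_dist T x t) N = measurable borel N"
  by (rule measurable_cong_sets) auto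

lemma meas_to_fh_dist_iff: "measurable N (fh_dist T x t) = measurable N borel"
  by (rule measurable_cong_sets) auto

lemma coord_meas[measurable]: "t \<in> {1..T} \<Longrightarrow> (\<lambda>w. w t) \<in> borel_measurable (fh_measure T x)"
proof -
  assume "t \<in> {1..T}"
  then have "(\<lambda>w. w t) \<in> measurable (PiM {1..T} (fh_dist T x)) (fh_dist T x t)"
    by (rule measurable_component_singleton)
  then show ?thesis unfolding fh_measure_def meas_to_fh_dist_iff .
qed

lemma coord_distr: "t \<in> {1..T} \<Longrightarrow> distr (fh_measure T x) (fh_dist T x t) (\<lambda>w. w t) = fh_dist T x t"
  unfolding fh_measure_def by (rule distr_PiM_component) (auto intro: fh_dist_prob_space)

lemma coord_integral:
  fixes f :: "real \<Rightarrow> real"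
  assumes "t \<in> {1..T}" "f \<in> borel_measurable borel"
  shows "(\<integral>w. f (w t) \<partial>fh_measure T x) = (\<integral>y. f y \<partial>fh_dist T x t)"
proof -
  have "(\<integral>y. f y \<partial>fh_dist T x t) = (\<integral>y. f y \<partial>distr (fh_measure T x) (fh_dist T x t) (\<lambda>w. w t))"
    using coord_distr[OF assms(1)] by simp
  also have "\<dots> = (\<integral>w. f (w t) \<partial>fh_measure T x)"
    by (rule integral_distr) (use assms in \<open>auto simp: meas_fh_dist_iff meas_to_fh_dist_iff\<close>)
  finally show ?thesis by simp
qed

lemma coord_indep: "prob_space.indep_vars (fh_measure T x) (fh_dist T x) (\<lambda>t w. w t) {1..T}"
proof (cases "T = 0")
  case True
  interpret prob_space "fh_measure T x" by (rule fh_measure_prob)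
  show ?thesis using True unfolding indep_vars_def indep_sets_def by auto
next
  case False
  interpret prob_space "fh_measure T x" by (rule fh_measure_prob)
  have rv: "random_variable (fh_dist T x i) (\<lambda>w. w i)" if "i \<in> {1..T}" for i
    using coord_meas[OF that, of x] by (simp add: meas_to_fh_dist_iff)
  show ?thesis
  proof (subst indep_vars_iff_distr_eq_PiM'[OF _ rv])
    show "{1..T} \<noteq> {}" using False by simp
    have "distr (fh_measure T x) (Pi\<^sub>M {1..T} (fh_dist T x)) (\<lambda>xa. \<lambda>i\<in>{1..T}. xa i)
        = distr (fh_measure T x) (fh_measure T x) (\<lambda>xa. xa)"
      by (rule distr_cong) (auto simp: fh_measure_def space_PiM)
    also have "\<dots> = fh_measure T x" by simp
    also have "\<dots> = (Pi\<^sub>M {1..T} (\<lambda>i. distr (fh_measure T x) (fh_dist T x i) (\<lambda>xa. xa i)))"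
      unfolding fh_measure_def
      by (rule PiM_cong[OF refl]) (erule coord_distr[unfolded fh_measure_def, symmetric])
    finally show "distr (fh_measure T x) (Pi\<^sub>M {1..T} (fh_dist T x)) (\<lambda>xa. \<lambda>i\<in>{1..T}. xa i)
        = (Pi\<^sub>M {1..T} (\<lambda>i. distr (fh_measure T x) (fh_dist T x i) (\<lambda>xa. xa i)))" .
  qed auto
qed


lemma indic_sq: "(indicator A y :: real)^2 = indicator A y"
  by (simp add: indicator_def)

lemma E4_indic:
  fixes w :: "nat \<Rightarrow> real" and A :: "nat \<Rightarrow> real set"
  assumes I: "I \<subseteq> {1..T}" and A: "\<And>t. t \<in> I \<Longrightarrow> A t \<in> sets borel"
    and w: "\<And>t. t \<in> I \<Longrightarrow> 0 \<le> w t \<and> w t \<le> 1"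
  shows "(\<integral>\<omega>. (\<Sum>t\<in>I. w t * (indicator (A t) (\<omega> t) - measure (fh_dist T x t) (A t)))^4 \<partial>fh_measure T x)
     \<le> (\<Sum>t\<in>I. w t * measure (fh_dist T x t) (A t)) + 3 * (\<Sum>t\<in>I. w t * measure (fh_dist T x t) (A t))^2"
proof -
  interpret prob_space "fh_measure T x" by (rule fh_measure_prob)
  have finI: "finite I" using I finite_subset by blast
  define m where "m t = measure (fh_dist T x t) (A t)" for t
  define Z where "Z t \<omega> = w t * (indicator (A t) (\<omega> t) - m t)" for t \<omega>
  have m01: "0 \<le> m t \<and> m t \<le> 1" for t
    unfolding m_def using prob_space.prob_le_1[OF fh_dist_prob_space] by auto
  have ind: "indep_vars (\<lambda>_. borel) Z I"
  proof -
    have "indep_vars (fh_dist T x) (\<lambda>t w. w t) I"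
      using coord_indep I by (rule indep_vars_subset)
    then have "indep_vars (\<lambda>_. borel) (\<lambda>t \<omega>. (\<lambda>y. w t * (indicator (A t) y - m t)) (\<omega> t)) I"
      by (rule indep_vars_compose2) (use A in \<open>auto simp: meas_fh_dist_iff\<close>)
    then show ?thesis unfolding Z_def by simp
  qed
  have bnd: "\<bar>Z t \<omega>\<bar> \<le> 1" if "t \<in> I" for t \<omega>
  proof -
    have "\<bar>indicator (A t) (\<omega> t) - m t\<bar> \<le> 1" using m01[of t] by (auto simp: indicator_def)
    then have "\<bar>w t\<bar> * \<bar>indicator (A t) (\<omega> t) - m t\<bar> \<le> 1 * 1"
      using w[OF that] by (intro mult_mono) auto
    then show ?thesis unfolding Z_def by (simp add: abs_mult)
  qed
  have EZ: "expectation (Z t) = 0" and EZ2: "expectation (\<lambda>\<omega>. (Z t \<omega>)^2) \<le> w t * m t" if "t \<in> I" for t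
  proof -
    have tT: "t \<in> {1..T}" using that I by auto
    interpret D: prob_space "fh_dist T x t" by (rule fh_dist_prob_space)
    have Am: "A t \<in> sets (fh_dist T x t)" using A[OF that] by simp
    have pU: "measure (fh_dist T x t) UNIV = 1" using D.prob_space by simp
    have intind: "(\<integral>y. indicator (A t) y \<partial>fh_dist T x t) = m t"
      unfolding m_def using Am by simp
    have intI: "integrable (fh_dist T x t) (indicator (A t) :: real \<Rightarrow> real)"
      by (rule integrable_real_indicator[OF Am]) (simp add: less_top[symmetric])
    have "expectation (Z t) = (\<integral>y. w t * (indicator (A t) y - m t) \<partial>fh_dist T x t)"
      unfolding Z_def by (rule coord_integral[OF tT]) (use A[OF that] in measurable)
    also have "\<dots> = w t * ((\<integral>y. indicator (A t) y \<partial>fh_dist T x t) - m t)"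
      using intI by (simp add: pU Bochner_Integration.integral_diff)
    finally show "expectation (Z t) = 0" using intind by simp
    have "expectation (\<lambda>\<omega>. (Z t \<omega>)^2) = (\<integral>y. (w t * (indicator (A t) y - m t))^2 \<partial>fh_dist T x t)"
      unfolding Z_def by (rule coord_integral[OF tT]) (use A[OF that] in measurable)
    also have "\<dots> = (\<integral>y. (w t)^2 * ((1 - 2 * m t) * indicator (A t) y + (m t)^2) \<partial>fh_dist T x t)"
      by (rule Bochner_Integration.integral_cong[OF refl])
         (simp add: power2_eq_square algebra_simps indicator_times_eq_if(1) indicator_def)
    also have "\<dots> = (w t)^2 * ((1 - 2 * m t) * m t + (m t)^2)"
      using intI by (simp add: pU intind[symmetric])
    also have "\<dots> = (w t)^2 * (m t - (m t)^2)" by (simp add: algebra_simps power2_eq_square)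
    also have "\<dots> \<le> w t * m t"
    proof -
      have "(w t)^2 \<le> w t" using w[OF that] by (simp add: power2_eq_square mult_left_le)
      moreover have "m t - (m t)^2 \<le> m t" by simp
      moreover have "0 \<le> m t - (m t)^2" using m01[of t] by (simp add: power2_eq_square mult_left_le)
      ultimately show ?thesis using w[OF that] m01[of t] by (intro mult_mono) auto
    qed
    finally show "expectation (\<lambda>\<omega>. (Z t \<omega>)^2) \<le> w t * m t" .
  qed
  have mom: "expectation (\<lambda>w. (\<Sum>i\<in>I. Z i w)^4) \<le> (\<Sum>i\<in>I. expectation (\<lambda>w. (Z i w)^2))
         + 3 * (\<Sum>i\<in>I. expectation (\<lambda>w. (Z i w)^2))^2"
    using moments_indep[OF finI ind] bnd EZ by blast
  have V'le: "(\<Sum>i\<in>I. expectation (\<lambda>w. (Z i w)^2)) \<le> (\<Sum>t\<in>I. w t * m t)"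
    by (rule sum_mono) (rule EZ2)
  have V'nn: "0 \<le> (\<Sum>i\<in>I. expectation (\<lambda>w. (Z i w)^2))" by (intro sum_nonneg) simp
  have "(\<Sum>i\<in>I. expectation (\<lambda>w. (Z i w)^2)) + 3 * (\<Sum>i\<in>I. expectation (\<lambda>w. (Z i w)^2))^2
      \<le> (\<Sum>t\<in>I. w t * m t) + 3 * (\<Sum>t\<in>I. w t * m t)^2"
    using V'le V'nn by (intro add_mono mult_left_mono power_mono) auto
  with mom show ?thesis unfolding Z_def m_def by simp
qed


lemma exp_le_quad:
  fixes y :: real assumes "\<bar>y\<bar> \<le> 1" shows "exp y \<le> 1 + y + y^2"
proof (cases "0 \<le> y")
  case True then show ?thesis using assms exp_bound[of y] by simp
next
  case False
  define z where "z = - y"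
  have z: "0 \<le> z" "z \<le> 1" using False assms unfolding z_def by auto
  have "exp z \<ge> 1 + z" by (rule exp_ge_add_one_self)
  then have "exp (-z) \<le> 1 / (1 + z)" using z
    by (simp add: exp_minus divide_simps)
  also have "\<dots> \<le> 1 - z + z^2"
  proof -
    have "1 \<le> (1 - z + z^2) * (1 + z)" using z by (simp add: algebra_simps power2_eq_square power3_eq_cube)
    then show ?thesis using z by (simp add: divide_simps)
  qed
  finally show ?thesis unfolding z_def by simp
qed

definition Phi :: "real \<Rightarrow> real \<Rightarrow> real" where
  "Phi e z = ln (exp (e*z) + exp (-(e*z)))"

lemma Phi_step:
  assumes e: "0 < e" "e \<le> 1" and a: "\<bar>a\<bar> \<le> 1"
  shows "e * ((1 - 2 * S (e * A)) * a) \<le> Phi e A - Phi e (A + a) + e^2"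
proof -
  define e1 where "e1 = exp (e*A)"
  define e2 where "e2 = exp (-(e*A))"
  define q where "q = S (e*A)"
  define y where "y = e * a"
  have e12: "0 < e1" "0 < e2" unfolding e1_def e2_def by auto
  have q: "q = e1 / (e1 + e2)" unfolding q_def S_def e1_def e2_def by simp
  have q01: "0 \<le> q" "q \<le> 1" unfolding q_def by (auto simp: S_nonneg S_le1)
  have y1: "\<bar>y\<bar> \<le> 1" unfolding y_def using e a by (simp add: abs_mult mult_le_one)
  have a2: "a^2 \<le> 1" using a by (simp add: abs_square_le_1)
  have y2: "y^2 \<le> e^2" unfolding y_def power_mult_distrib using a2 e
    by (simp add: mult_left_le)
  have q1: "1 - q = e2 / (e1 + e2)" using e12 by (simp add: q field_simps)
  have sum_eq0: "(e1 + e2) * (q * exp y + (1 - q) * exp (-y)) = e1 * exp y + e2 * exp (-y)"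
  proof -
    have n: "e1 + e2 \<noteq> 0" using e12 by simp
    have "(e1 + e2) * q = e1" "(e1 + e2) * (1 - q) = e2" unfolding q1 unfolding q using n by simp_all
    moreover have "(e1 + e2) * (q * exp y + (1 - q) * exp (-y)) = ((e1 + e2) * q) * exp y + ((e1 + e2) * (1 - q)) * exp (-y)"
      by (simp add: algebra_simps)
    ultimately show ?thesis by simp
  qed
  have x1: "exp (e*(A+a)) = e1 * exp y" unfolding e1_def y_def by (simp add: exp_add[symmetric] distrib_left)
  have x2: "exp (-(e*(A+a))) = e2 * exp (-y)" unfolding e2_def y_def by (simp add: exp_add[symmetric] distrib_left)
  have sum_eq: "exp (e*(A+a)) + exp (-(e*(A+a))) = (e1 + e2) * (q * exp y + (1 - q) * exp (-y))"
    unfolding sum_eq0 x1 x2 ..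
  have b1: "exp y \<le> 1 + y + y^2" using exp_le_quad[OF y1] .
  have b2: "exp (-y) \<le> 1 + (-y) + (-y)^2" using exp_le_quad[of "-y"] y1 by simp
  have "q * exp y + (1 - q) * exp (-y) \<le> q * (1 + y + y^2) + (1 - q) * (1 + (-y) + (-y)^2)"
    using q01 b1 b2 by (intro add_mono mult_left_mono) auto
  also have "\<dots> = 1 + (2*q - 1) * y + y^2" by (simp add: algebra_simps power2_eq_square)
  finally have le: "q * exp y + (1 - q) * exp (-y) \<le> 1 + (2*q - 1) * y + y^2" .
  have pos: "0 < q * exp y + (1 - q) * exp (-y)"
  proof (cases "q = 0")
    case True then show ?thesis by simp
  next
    case False then have "0 < q * exp y" using q01 by simp
    moreover have "0 \<le> (1 - q) * exp (-y)" using q01 by simp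
    ultimately show ?thesis by linarith
  qed
  have "Phi e (A + a) = ln (e1 + e2) + ln (q * exp y + (1 - q) * exp (-y))"
    unfolding Phi_def sum_eq using e12 pos by (simp add: ln_mult)
  also have "\<dots> \<le> ln (e1 + e2) + ((2*q - 1) * y + y^2)"
  proof -
    have "ln (q * exp y + (1 - q) * exp (-y)) \<le> ln (1 + (2*q - 1) * y + y^2)"
      using le pos by simp
    also have "\<dots> \<le> (2*q - 1) * y + y^2"
      using ln_le_minus_one[of "1 + (2*q - 1) * y + y^2"] le pos by simp
    finally show ?thesis by simp
  qed
  finally have "Phi e (A + a) \<le> Phi e A + ((2*q - 1) * y + y^2)"
    unfolding Phi_def e1_def e2_def by simp
  then show ?thesis using y2 unfolding q_def y_def by (simp add: algebra_simps)
qed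

lemma Phi_upper: "0 < e \<Longrightarrow> Phi e z \<le> ln 2 + e * \<bar>z\<bar>"
proof -
  assume e: "0 < e"
  have "exp (e*z) + exp (-(e*z)) \<le> 2 * exp (e * \<bar>z\<bar>)"
  proof (cases "0 \<le> z")
    case True
    then have "-(e*z) \<le> e*z" using e by simp
    then show ?thesis using True by simp
  next
    case False
    then have "e*z \<le> -(e*z)" "e * \<bar>z\<bar> = -(e*z)" using e by (simp_all add: mult_pos_neg less_imp_le)
    then show ?thesis by simp
  qed
  then have "Phi e z \<le> ln (2 * exp (e * \<bar>z\<bar>))"
    unfolding Phi_def by (simp add: add_pos_pos)
  also have "\<dots> = ln 2 + e * \<bar>z\<bar>" by (simp add: ln_mult)
  finally show ?thesis .
qed

lemma Phi_lower: "0 < e \<Longrightarrow> e * \<bar>z\<bar> \<le> Phi e z"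
proof -
  assume e: "0 < e"
  have "exp (e * \<bar>z\<bar>) \<le> exp (e*z) + exp (-(e*z))"
  proof (cases "0 \<le> z")
    case True then show ?thesis by (simp add: add_increasing2 less_imp_le)
  next
    case False then have "e * \<bar>z\<bar> = -(e*z)" by simp
    then show ?thesis by (simp add: add_increasing less_imp_le)
  qed
  then have "ln (exp (e * \<bar>z\<bar>)) \<le> Phi e z"
    unfolding Phi_def by (subst ln_le_cancel_iff) (auto simp: add_pos_pos)
  then show ?thesis by simp
qed

lemma hedge_sum:
  fixes a :: "nat \<Rightarrow> real"
  assumes e: "0 < e" "e \<le> 1" and a: "\<And>t. \<bar>a t\<bar> \<le> 1" and T: "1 \<le> T"
  shows "e * (\<Sum>t=2..T. (1 - 2 * S (e * (\<Sum>s=1..t-1. a s))) * a t)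
     \<le> Phi e (\<Sum>s=1..1. a s) - Phi e (\<Sum>s=1..T. a s) + (real T - 1) * e^2"
  using T
proof (induction T rule: dec_induct)
  case base
  then show ?case by simp
next
  case (step n)
  have Asuc: "(\<Sum>s=1..Suc n. a s) = (\<Sum>s=1..n. a s) + a (Suc n)" by simp
  have Sprev: "(\<Sum>s=1..Suc n - 1. a s) = (\<Sum>s=1..n. a s)" by simp
  have "e * (\<Sum>t=2..Suc n. (1 - 2 * S (e * (\<Sum>s=1..t-1. a s))) * a t)
      = e * (\<Sum>t=2..n. (1 - 2 * S (e * (\<Sum>s=1..t-1. a s))) * a t)
        + e * ((1 - 2 * S (e * (\<Sum>s=1..n. a s))) * a (Suc n))"
    using step.hyps by (simp add: distrib_left)
  also have "\<dots> \<le> (Phi e (\<Sum>s=1..1. a s) - Phi e (\<Sum>s=1..n. a s) + (real n - 1) * e^2)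
       + (Phi e (\<Sum>s=1..n. a s) - Phi e ((\<Sum>s=1..n. a s) + a (Suc n)) + e^2)"
    by (intro add_mono step.IH Phi_step e a)
  also have "\<dots> = Phi e (\<Sum>s=1..1. a s) - Phi e (\<Sum>s=1..Suc n. a s) + (real (Suc n) - 1) * e^2"
    unfolding Asuc by (simp add: algebra_simps)
  finally show ?case .
qed


definition Ydev :: "nat \<Rightarrow> (nat \<Rightarrow> real) \<Rightarrow> nat \<Rightarrow> (nat \<Rightarrow> real) \<Rightarrow> real \<Rightarrow> real" where
  "Ydev T x t p v = (indicator {..v} (p t) - fh_cdf T x t v) + (indicator {..<v} (p t) - fh_cdfm T x t v)"

definition gfun :: "nat \<Rightarrow> (nat \<Rightarrow> real) \<Rightarrow> real \<Rightarrow> real" where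
  "gfun T x v = (\<Sum>t=1..T. (1 - fh_cdf T x t v - fh_cdfm T x t v) * (v - x t)) + \<bar>\<Sum>t=1..T. (v - x t)\<bar>"

lemma sgn_indic: "sgn (p - v) = 1 - indicator {..v} p - indicator {..<v} (p::real)"
  by (auto simp: indicator_def sgn_if)

lemma ell_V_01: "y \<in> {0,1} \<Longrightarrow> ell_V v p y = sgn (p - v) * (v - y)"
  unfolding ell_V_def by (auto simp: sgn_if)

lemma Reg_decomp:
  assumes T: "1 \<le> T" and x: "\<forall>t\<in>{1..T}. x t \<in> {0,1}"
  shows "Reg (ell_V v) T p x = gfun T x v - (\<Sum>t=1..T. (v - x t) * Ydev T x t p v)"
proof -
  have "(\<Sum>t=1..T. ell_V v (p t) (x t)) = (\<Sum>t=1..T. (1 - indicator {..v} (p t) - indicator {..<v} (p t)) * (v - x t))"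
    using x by (intro sum.cong) (auto simp: ell_V_01 sgn_indic)
  also have "\<dots> = (\<Sum>t=1..T. (1 - fh_cdf T x t v - fh_cdfm T x t v) * (v - x t)) - (\<Sum>t=1..T. (v - x t) * Ydev T x t p v)"
    unfolding sum_subtractf[symmetric] by (intro sum.cong) (auto simp: Ydev_def algebra_simps)
  finally have 1: "(\<Sum>t=1..T. ell_V v (p t) (x t)) = \<dots>" .
  have Tv: "(\<Sum>t=1..T. (v - x t)) = real T * (v - beta T x)"
    using T unfolding beta_def by (simp add: sum_subtractf algebra_simps)
  have "(\<Sum>t=1..T. ell_V v (beta T x) (x t)) = (\<Sum>t=1..T. sgn (beta T x - v) * (v - x t))"
    using x by (intro sum.cong) (auto simp: ell_V_01)
  also have "\<dots> = sgn (beta T x - v) * (real T * (v - beta T x))"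
    unfolding sum_distrib_left[symmetric] Tv ..
  also have "\<dots> = - \<bar>\<Sum>t=1..T. (v - x t)\<bar>"
    unfolding Tv using T by (auto simp: sgn_if abs_mult algebra_simps)
  finally have 2: "(\<Sum>t=1..T. ell_V v (beta T x) (x t)) = - \<bar>\<Sum>t=1..T. (v - x t)\<bar>" .
  show ?thesis unfolding Reg_def 1 2 gfun_def by simp
qed

lemma xhat_eq: "1 \<le> n \<Longrightarrow> real n * (v - xhat x n) = (\<Sum>s=1..n. (v - x s))"
  unfolding xhat_def by (simp add: sum_subtractf algebra_simps)

lemma gfun_bound:
  assumes T: "1 \<le> T" and x: "\<forall>t\<in>{1..T}. x t \<in> {0,1}" and v: "0 \<le> v" "v \<le> 1"
  shows "gfun T x v \<le> 2 + 2 * sqrt (real T)"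
proof -
  define e where "e = eta T"
  have e: "0 < e" "e \<le> 1" unfolding e_def eta_def using T by auto
  define a where "a s = (if s \<in> {1..T} then v - x s else 0)" for s
  have a1: "\<bar>a s\<bar> \<le> 1" for s
  proof (cases "s \<in> {1..T}")
    case True then have "x s = 0 \<or> x s = 1" using x by auto
    then show ?thesis using True v unfolding a_def by auto
  next
    case False then show ?thesis unfolding a_def if_not_P[OF False] by simp
  qed
  define A where "A n = (\<Sum>s=1..n. a s)" for n
  have AT: "A T = (\<Sum>t=1..T. (v - x t))" unfolding A_def a_def by (intro sum.cong) auto
  have cmp: "(1 - fh_cdf T x t v - fh_cdfm T x t v) * (v - x t) \<le> (1 - 2 * S (e * A (t - 1))) * a t"
    if t: "t \<in> {2..T}" for t
  proof -
    have t1: "t \<noteq> 1" "1 \<le> t - 1" using t by auto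
    have at: "a t = v - x t" using t unfolding a_def by auto
    have Aeq: "A (t - 1) = real (t - 1) * (v - xhat x (t - 1))"
      unfolding xhat_eq[OF t1(2)] A_def a_def using t by (intro sum.cong) auto
    define q where "q = S (e * A (t - 1))"
    have q01: "0 \<le> q" "q \<le> 1" unfolding q_def by (auto simp: S_nonneg S_le1)
    have gq: "gS T x t v = q" unfolding gS_def q_def Aeq e_def by (simp add: mult.assoc)
    have xt: "x t = 0 \<or> x t = 1" using x t by auto
    consider "v = 0" | "0 < v" "v < 1" | "v = 1" using v by linarith
    then show ?thesis
    proof cases
      case 1
      have "fh_cdf T x t v = q" "fh_cdfm T x t v = 0"
        using 1 t1 gq unfolding fh_cdf_pw[OF t1(1)] fh_cdfm_def pw_def pwm_def by auto
      then show ?thesis unfolding at q_def[symmetric] using 1 q01 xt by auto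
    next
      case 2
      have "fh_cdf T x t v = q" "fh_cdfm T x t v = q"
        using 2 t1 gq unfolding fh_cdf_pw[OF t1(1)] fh_cdfm_def pw_def pwm_def by auto
      then show ?thesis unfolding at q_def[symmetric] by (simp add: algebra_simps)
    next
      case 3
      have "fh_cdf T x t v = 1" "fh_cdfm T x t v = q"
        using 3 t1 gq unfolding fh_cdf_pw[OF t1(1)] fh_cdfm_def pw_def pwm_def by auto
      then show ?thesis unfolding at q_def[symmetric] using 3 q01 xt by auto
    qed
  qed
  have first: "(1 - fh_cdf T x 1 v - fh_cdfm T x 1 v) * (v - x 1) \<le> 1"
  proof -
    have "\<bar>1 - fh_cdf T x 1 v - fh_cdfm T x 1 v\<bar> \<le> 1"
      unfolding fh_cdf_def fh_cdfm_def by auto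
    moreover have "\<bar>v - x 1\<bar> \<le> 1" using a1[of 1] T unfolding a_def by simp
    ultimately have "\<bar>(1 - fh_cdf T x 1 v - fh_cdfm T x 1 v) * (v - x 1)\<bar> \<le> 1 * 1"
      unfolding abs_mult by (intro mult_mono) auto
    then show ?thesis by simp
  qed
  have split: "(\<Sum>t=1..T. f t) = f 1 + (\<Sum>t=2..T. f t)" for f :: "nat \<Rightarrow> real"
    using T by (metis Suc_1 sum.atLeast_Suc_atMost)
  have hs: "e * (\<Sum>t=2..T. (1 - 2 * S (e * A (t - 1))) * a t) \<le> Phi e (A 1) - Phi e (A T) + (real T - 1) * e^2"
    unfolding A_def by (rule hedge_sum[OF e a1 T])
  have "Phi e (A 1) \<le> ln 2 + e * \<bar>A 1\<bar>" by (rule Phi_upper[OF e(1)])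
  moreover have "e * \<bar>A T\<bar> \<le> Phi e (A T)" by (rule Phi_lower[OF e(1)])
  moreover have "\<bar>A 1\<bar> \<le> 1" unfolding A_def using a1[of 1] by simp
  ultimately have "e * (\<Sum>t=2..T. (1 - 2 * S (e * A (t - 1))) * a t) \<le> e * (ln 2 / e + 1 - \<bar>A T\<bar> + (real T - 1) * e)"
  proof -
    have r: "e * (ln 2 / e + 1 - \<bar>A T\<bar> + (real T - 1) * e) = ln 2 + e - e * \<bar>A T\<bar> + (real T - 1) * e^2"
      using e by (simp add: algebra_simps power2_eq_square)
    have "e * \<bar>A 1\<bar> \<le> e" using \<open>\<bar>A 1\<bar> \<le> 1\<close> e by (simp add: mult_left_le)
    then show ?thesis unfolding r using hs \<open>Phi e (A 1) \<le> ln 2 + e * \<bar>A 1\<bar>\<close> \<open>e * \<bar>A T\<bar> \<le> Phi e (A T)\<close> by linarith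
  qed
  then have hs2: "(\<Sum>t=2..T. (1 - 2 * S (e * A (t - 1))) * a t) \<le> ln 2 / e + 1 - \<bar>A T\<bar> + (real T - 1) * e"
    using e by simp
  have "gfun T x v \<le> 1 + (\<Sum>t=2..T. (1 - 2 * S (e * A (t - 1))) * a t) + \<bar>A T\<bar>"
  proof -
    have sm: "(\<Sum>t=2..T. (1 - fh_cdf T x t v - fh_cdfm T x t v) * (v - x t)) \<le> (\<Sum>t=2..T. (1 - 2 * S (e * A (t - 1))) * a t)"
      by (rule sum_mono) (rule cmp)
    have "gfun T x v = (1 - fh_cdf T x 1 v - fh_cdfm T x 1 v) * (v - x 1) + (\<Sum>t=2..T. (1 - fh_cdf T x t v - fh_cdfm T x t v) * (v - x t)) + \<bar>A T\<bar>"
      unfolding gfun_def AT[symmetric] split ..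
    then show ?thesis using sm first by linarith
  qed
  also have "\<dots> \<le> 2 + ln 2 / e + (real T - 1) * e" using hs2 by linarith
  also have "\<dots> \<le> 2 + 2 * sqrt (real T)"
  proof -
    have "ln 2 / e = ln 2 * sqrt (real T)" unfolding e_def eta_def by simp
    also have "\<dots> \<le> 1 * sqrt (real T)" using ln_2_less_1 by (intro mult_right_mono) auto
    finally have 1: "ln 2 / e \<le> sqrt (real T)" by simp
    have "(real T - 1) * e \<le> real T * e" using e by simp
    also have "\<dots> = sqrt (real T)" unfolding e_def eta_def
      by (simp add: real_div_sqrt)
    finally show ?thesis using 1 by linarith
  qed
  finally show ?thesis .
qed


lemma gS_strict: assumes "1 \<le> T" "2 \<le> t" "u < u'" shows "gS T x t u < gS T x t u'"
proof -
  have c: "0 < eta T * real (t-1)" using assms by (simp add: eta_def)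
  show ?thesis unfolding gS_def
    by (rule S_strict_mono, rule mult_strict_left_mono[OF _ c]) (use assms in auto)
qed

lemma gS_mono: "u \<le> u' \<Longrightarrow> gS T x t u \<le> gS T x t u'"
  using pwg.g_mono[OF pwg_gS] .

lemma gS_cont: "continuous_on A (gS T x t)"
  using pwg.g_cont[OF pwg_gS] by (simp add: continuous_at_imp_continuous_on)

lemma F_eq_gS: "t \<noteq> 1 \<Longrightarrow> 0 \<le> u \<Longrightarrow> u < 1 \<Longrightarrow> fh_cdf T x t u = gS T x t u"
  by (simp add: fh_cdf_pw pw_def)

lemma Fm_eq_gS: "t \<noteq> 1 \<Longrightarrow> 0 < u \<Longrightarrow> u \<le> 1 \<Longrightarrow> fh_cdfm T x t u = gS T x t u"
  by (simp add: fh_cdfm_def pwm_def)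

locale dev =
  fixes T :: nat and x :: "nat \<Rightarrow> real" and w :: "nat \<Rightarrow> real"
  assumes T1: "1 \<le> T" and w01: "\<And>t. t \<in> {2..T} \<Longrightarrow> 0 \<le> w t \<and> w t \<le> 1"
    and wpos: "\<exists>t\<in>{2..T}. 0 < w t"
begin

definition G :: "real \<Rightarrow> real" where "G u = (\<Sum>t\<in>{2..T}. w t * gS T x t u)"
definition L :: real where "L = G 1 - G 0"
definition Q :: "real \<Rightarrow> real" where "Q s = (SOME u. 0 \<le> u \<and> u \<le> 1 \<and> G u = G 0 + s * L)"
definition K :: nat where "K = (SOME K. 2^K \<le> T \<and> T < 2^(K+1))"

lemma G_strict: "u < u' \<Longrightarrow> G u < G u'"
proof -
  assume uu: "u < u'"
  obtain t0 where t0: "t0 \<in> {2..T}" "0 < w t0" using wpos by blast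
  have "G u = w t0 * gS T x t0 u + (\<Sum>t\<in>{2..T}-{t0}. w t * gS T x t u)"
    unfolding G_def using t0 by (simp add: sum.remove)
  also have "\<dots> < w t0 * gS T x t0 u' + (\<Sum>t\<in>{2..T}-{t0}. w t * gS T x t u')"
  proof (rule add_less_le_mono)
    show "w t0 * gS T x t0 u < w t0 * gS T x t0 u'"
      using t0 T1 uu by (intro mult_strict_left_mono gS_strict) auto
    show "(\<Sum>t\<in>{2..T}-{t0}. w t * gS T x t u) \<le> (\<Sum>t\<in>{2..T}-{t0}. w t * gS T x t u')"
      using w01 uu by (intro sum_mono mult_left_mono gS_mono) auto
  qed
  also have "\<dots> = G u'"
    unfolding G_def using t0 by (simp add: sum.remove)
  finally show ?thesis .
qed

lemma G_le_iff: "G u \<le> G u' \<longleftrightarrow> u \<le> u'"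
  using G_strict by (metis le_less not_less)

lemma G_eq_iff: "G u = G u' \<longleftrightarrow> u = u'"
  using G_le_iff by (metis order_antisym order_refl)

lemma G_cont: "continuous_on A G"
  unfolding G_def by (intro continuous_intros continuous_on_mult_left gS_cont)

lemma L_nonneg: "0 \<le> L" unfolding L_def using G_le_iff by simp

lemma L_le: "L \<le> real T"
proof -
  have "L = (\<Sum>t\<in>{2..T}. w t * (gS T x t 1 - gS T x t 0))"
    unfolding L_def G_def by (simp add: sum_subtractf algebra_simps)
  also have "\<dots> \<le> (\<Sum>t\<in>{2..T}. 1)"
  proof (rule sum_mono)
    fix t assume t: "t \<in> {2..T}"
    have "gS T x t 1 - gS T x t 0 \<le> 1" "0 \<le> gS T x t 1 - gS T x t 0"
      using S_nonneg S_le1 gS_mono[of 0 1 T x t] unfolding gS_def by (auto simp: algebra_simps)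
      (smt (verit) S_le1 S_nonneg)
    then show "w t * (gS T x t 1 - gS T x t 0) \<le> 1" using w01[OF t] by (simp add: mult_le_one)
  qed
  also have "\<dots> \<le> real T" by simp
  finally show ?thesis .
qed

lemma Q_prop: assumes "0 \<le> s" "s \<le> 1"
  shows "0 \<le> Q s \<and> Q s \<le> 1 \<and> G (Q s) = G 0 + s * L"
proof -
  have "\<exists>u. 0 \<le> u \<and> u \<le> 1 \<and> G u = G 0 + s * L"
  proof (rule IVT')
    show "G 0 \<le> G 0 + s * L" using assms L_nonneg by simp
    show "G 0 + s * L \<le> G 1" using assms L_nonneg unfolding L_def
      by (smt (verit, best) mult_left_le_one_le)
  qed (auto intro: G_cont)
  then show ?thesis unfolding Q_def by (rule someI_ex)
qed

lemma Q0: "Q 0 = 0" using Q_prop[of 0] G_eq_iff by simp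
lemma Q1: "Q 1 = 1" using Q_prop[of 1] G_eq_iff unfolding L_def by simp

lemma K_prop: "2^K \<le> T \<and> T < 2^(K+1)"
proof -
  have "\<exists>K. 2^K \<le> T \<and> T < 2^(K+1)" using ex_power_ivl1[of 2 T] T1 by auto
  then show ?thesis unfolding K_def by (rule someI_ex)
qed


definition Y :: "(nat \<Rightarrow> real) \<Rightarrow> real \<Rightarrow> real" where
  "Y p u = (\<Sum>t\<in>{2..T}. w t * (indicator {..u} (p t) - fh_cdf T x t u))"
definition Y' :: "(nat \<Rightarrow> real) \<Rightarrow> real \<Rightarrow> real" where
  "Y' p u = (\<Sum>t\<in>{2..T}. w t * (indicator {..<u} (p t) - fh_cdfm T x t u))"
definition D :: "(nat \<Rightarrow> real) \<Rightarrow> nat \<Rightarrow> real" where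
  "D p k = (\<Sum>i\<in>{1..<2^k}. (Y p (Q (real i / 2^k)) - Y p (Q (real (i - 1) / 2^k)))^4)"
definition Ties :: "(nat \<Rightarrow> real) \<Rightarrow> real" where
  "Ties p = (\<Sum>i\<in>{1..<2^K}. \<Sum>t\<in>{2..T}. w t * indicator {Q (real i / 2^K)} (p t))"
definition MY :: "(nat \<Rightarrow> real) \<Rightarrow> real" where
  "MY p = \<bar>Y p 0\<bar> + (\<Sum>k\<in>{1..K}. sqrt (sqrt (D p k))) + \<bar>Y p 1\<bar>"
definition H :: "(nat \<Rightarrow> real) \<Rightarrow> real" where
  "H p = 4 * MY p + 2 * (\<bar>Y' p 0\<bar> + \<bar>Y' p 1\<bar> + Ties p) + 4"

lemma Ties_nonneg: "0 \<le> Ties p"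
  unfolding Ties_def using w01 by (intro sum_nonneg mult_nonneg_nonneg) auto

lemma D_nonneg: "0 \<le> D p k" unfolding D_def by (intro sum_nonneg) simp

lemma MY_nonneg: "0 \<le> MY p"
  unfolding MY_def using D_nonneg by (intro add_nonneg_nonneg sum_nonneg) auto

lemma Q_strict: assumes "0 \<le> s" "s < s'" "s' \<le> 1" "0 < L" shows "Q s < Q s'"
proof -
  have "G (Q s) = G 0 + s * L" "G (Q s') = G 0 + s' * L" using Q_prop[of s] Q_prop[of s'] assms by auto
  moreover have "s * L < s' * L" using assms by simp
  ultimately have "G (Q s) < G (Q s')" by simp
  then show ?thesis using G_le_iff by (meson not_less)
qed

lemma L_pos: "0 < L"
  unfolding L_def using G_strict[of 0 1] by simp

lemma grid_Y: "j \<le> 2^K \<Longrightarrow> \<bar>Y p (Q (real j / 2^K))\<bar> \<le> MY p"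
proof -
  assume j: "j \<le> 2^K"
  show ?thesis
  proof (cases "j = 2^K")
    case True
    then show ?thesis using Q1 D_nonneg unfolding MY_def
      by (simp add: sum_nonneg)
  next
    case False
    then have "j < 2^K" using j by simp
    from chain_bound[of j K "\<lambda>s. Y p (Q s)", OF this]
    have "\<bar>Y p (Q (real j / 2^K))\<bar> \<le> \<bar>Y p (Q 0)\<bar> + (\<Sum>k\<in>{1..K}. sqrt (sqrt (D p k)))"
      unfolding D_def by simp
    then show ?thesis unfolding MY_def Q0 by simp
  qed
qed

lemma grid_Y': "j \<le> 2^K \<Longrightarrow> \<bar>Y' p (Q (real j / 2^K))\<bar> \<le> \<bar>Y' p 0\<bar> + \<bar>Y' p 1\<bar> + Ties p + MY p"
proof -
  assume j: "j \<le> 2^K"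
  consider "j = 0" | "j = 2^K" | "0 < j" "j < 2^K" using j by linarith
  then show ?thesis
  proof cases
    case 1 then show ?thesis using Q0 Ties_nonneg MY_nonneg by simp
  next
    case 2 then show ?thesis using Q1 Ties_nonneg MY_nonneg by simp
  next
    case 3
    define u where "u = Q (real j / 2^K)"
    have u01: "0 < u" "u < 1"
      using Q_strict[of 0 "real j / 2^K"] Q_strict[of "real j / 2^K" 1] L_pos 3 Q0 Q1
      unfolding u_def by (auto simp: field_simps)
    have eq: "Y' p u = Y p u - (\<Sum>t\<in>{2..T}. w t * indicator {u} (p t))"
      unfolding Y'_def Y_def sum_subtractf[symmetric]
    proof (rule sum.cong[OF refl])
      fix t assume t: "t \<in> {2..T}"
      have "fh_cdfm T x t u = fh_cdf T x t u"
        using t u01 F_eq_gS[of t u T x] Fm_eq_gS[of t u T x] by auto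
      moreover have "indicator {..<u} (p t) = (indicator {..u} (p t) - indicator {u} (p t) :: real)"
        by (auto simp: indicator_def)
      ultimately have "w t * (indicator {..<u} (p t) - fh_cdfm T x t u) =
          w t * ((indicator {..u} (p t) - indicator {u} (p t)) - fh_cdf T x t u)" by simp
      then show "w t * (indicator {..<u} (p t) - fh_cdfm T x t u) =
          w t * (indicator {..u} (p t) - fh_cdf T x t u) - w t * indicator {u} (p t)"
        by (simp add: algebra_simps)
    qed
    have tie: "(\<Sum>t\<in>{2..T}. w t * indicator {u} (p t)) \<le> Ties p"
      unfolding Ties_def u_def
      by (rule member_le_sum[of j]) (use 3 w01 in \<open>auto intro!: sum_nonneg\<close>)
    have tnn: "0 \<le> (\<Sum>t\<in>{2..T}. w t * indicator {u} (p t))" using w01 by (intro sum_nonneg) auto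
    have "\<bar>Y p u\<bar> \<le> MY p" unfolding u_def using grid_Y j by simp
    moreover have "\<bar>Y p u - (\<Sum>t\<in>{2..T}. w t * indicator {u} (p t))\<bar> \<le> \<bar>Y p u\<bar> + (\<Sum>t\<in>{2..T}. w t * indicator {u} (p t))"
      using tnn by linarith
    ultimately show ?thesis unfolding u_def[symmetric] eq using tie
      by (smt (verit) abs_ge_zero)
  qed
qed


lemma H_bound:
  assumes v: "0 \<le> v" "v \<le> 1"
  shows "\<bar>Y p v + Y' p v\<bar> \<le> H p"
proof -
  define s where "s = (G v - G 0) / L"
  have s01: "0 \<le> s" "s \<le> 1"
    unfolding s_def using L_pos v G_le_iff[of 0 v] G_le_iff[of v 1] unfolding L_def
    by (auto simp: field_simps)
  define j where "j = nat \<lfloor>s * 2^K\<rfloor>"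
  have sK: "0 \<le> s * 2^K" using s01 by simp
  have jle: "real j \<le> s * 2^K" "s * 2^K < real j + 1"
    unfolding j_def using sK by linarith+
  have j2K: "j \<le> 2^K"
  proof -
    have "real j \<le> 2^K" using jle(1) s01 by (smt (verit) mult_left_le_one_le zero_le_power)
    then show ?thesis by (metis of_nat_le_iff of_nat_numeral of_nat_power)
  qed
  define a where "a = Q (real j / 2^K)"
  have jK01: "0 \<le> real j / 2^K" "real j / 2^K \<le> 1" using j2K by (auto simp: field_simps)
  have Ga: "G a = G 0 + (real j / 2^K) * L" unfolding a_def using Q_prop[OF jK01] by simp
  have a01: "0 \<le> a" "a \<le> 1" unfolding a_def using Q_prop[OF jK01] by auto
  have Gv: "G v = G 0 + s * L" unfolding s_def using L_pos by simp
  have "real j / 2^K \<le> s" using jle(1) by (simp add: field_simps)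
  then have "(real j / 2^K) * L \<le> s * L" using L_pos by (intro mult_right_mono) auto
  then have "G a \<le> G v" unfolding Ga Gv by simp
  then have av: "a \<le> v" using G_le_iff by simp
  have HY: "\<bar>Y p a\<bar> \<le> MY p" unfolding a_def using grid_Y[OF j2K] .
  have HY': "\<bar>Y' p a\<bar> \<le> \<bar>Y' p 0\<bar> + \<bar>Y' p 1\<bar> + Ties p + MY p" unfolding a_def using grid_Y'[OF j2K] .
  have Hdef: "H p = 4 * MY p + 2 * (\<bar>Y' p 0\<bar> + \<bar>Y' p 1\<bar> + Ties p) + 4" unfolding H_def ..
  show ?thesis
  proof (cases "v = a")
    case True
    then show ?thesis using HY HY' MY_nonneg Ties_nonneg unfolding Hdef by (smt (verit) abs_ge_zero)
  next
    case False
    then have av': "a < v" using av by simp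
    have jlt: "j < 2^K"
    proof (rule ccontr)
      assume "\<not> j < 2^K"
      then have "j = 2^K" using j2K by simp
      then have "a = 1" unfolding a_def using Q1 by simp
      then show False using av' v by simp
    qed
    define b where "b = Q (real (j+1) / 2^K)"
    have jK01': "0 \<le> real (j+1) / 2^K" "real (j+1) / 2^K \<le> 1" using jlt
      by (auto simp: field_simps) (metis Suc_leI of_nat_Suc of_nat_le_iff of_nat_numeral of_nat_power)
    have Gb: "G b = G 0 + (real (j+1) / 2^K) * L" unfolding b_def using Q_prop[OF jK01'] by simp
    have b01: "0 \<le> b" "b \<le> 1" unfolding b_def using Q_prop[OF jK01'] by auto
    have "s < real (j+1) / 2^K" using jle(2) by (simp add: field_simps)
    then have "s * L < (real (j+1) / 2^K) * L" using L_pos by (intro mult_strict_right_mono) auto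
    then have "G v < G b" unfolding Gb Gv by simp
    then have vb: "v < b" using G_le_iff by (meson not_less)
    have cell: "G b - G a = L / 2^K" unfolding Ga Gb by (simp add: field_simps)
    have cell2: "G b - G a \<le> 2"
    proof -
      have "L / 2^K \<le> real T / 2^K" using L_le by (simp add: divide_right_mono)
      also have "\<dots> \<le> 2"
      proof -
        have "real T < 2^(K+1)" using K_prop by (metis of_nat_less_iff of_nat_numeral of_nat_power)
        then show ?thesis by (simp add: field_simps)
      qed
      finally show ?thesis unfolding cell .
    qed
    have Gdiff: "G b - G a = (\<Sum>t\<in>{2..T}. w t * (gS T x t b - gS T x t a))"
      unfolding G_def by (simp add: sum_subtractf algebra_simps)
    have Ya: "Y p a = (\<Sum>t\<in>{2..T}. w t * (indicator {..a} (p t) - gS T x t a))"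
      unfolding Y_def using a01 av' v by (intro sum.cong refl) (auto simp: F_eq_gS)
    have Y'b: "Y' p b = (\<Sum>t\<in>{2..T}. w t * (indicator {..<b} (p t) - gS T x t b))"
      unfolding Y'_def using b01 av' vb a01 by (intro sum.cong refl) (auto simp: Fm_eq_gS)
    have YY: "Y p v + Y' p v = (\<Sum>t\<in>{2..T}. w t * (indicator {..v} (p t) + indicator {..<v} (p t) - 2 * gS T x t v))"
      unfolding Y_def Y'_def sum.distrib[symmetric] using av' vb a01 b01
      by (intro sum.cong refl) (auto simp: F_eq_gS Fm_eq_gS algebra_simps)
    have lower: "2 * Y p a - 2 * (G b - G a) \<le> Y p v + Y' p v"
    proof -
      have "2 * Y p a - 2 * (G b - G a) = (\<Sum>t\<in>{2..T}. w t * (2 * indicator {..a} (p t) - 2 * gS T x t b))"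
        unfolding Ya Gdiff sum_distrib_left sum_subtractf[symmetric] by (intro sum.cong refl) (simp add: algebra_simps)
      also have "\<dots> \<le> (\<Sum>t\<in>{2..T}. w t * (indicator {..v} (p t) + indicator {..<v} (p t) - 2 * gS T x t v))"
      proof (rule sum_mono, rule mult_left_mono)
        fix t assume t: "t \<in> {2..T}"
        have "indicator {..a} (p t) \<le> (indicator {..v} (p t) :: real)" "indicator {..a} (p t) \<le> (indicator {..<v} (p t) :: real)"
          using av' by (auto simp: indicator_def)
        moreover have "gS T x t v \<le> gS T x t b" using vb by (intro gS_mono) simp
        ultimately show "2 * indicator {..a} (p t) - 2 * gS T x t b \<le> indicator {..v} (p t) + indicator {..<v} (p t) - 2 * gS T x t v"
          by linarith
        show "0 \<le> w t" using w01 t by auto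
      qed
      finally show ?thesis unfolding YY .
    qed
    have upper: "Y p v + Y' p v \<le> 2 * Y' p b + 2 * (G b - G a)"
    proof -
      have "(\<Sum>t\<in>{2..T}. w t * (indicator {..v} (p t) + indicator {..<v} (p t) - 2 * gS T x t v))
          \<le> (\<Sum>t\<in>{2..T}. w t * (2 * indicator {..<b} (p t) - 2 * gS T x t a))"
      proof (rule sum_mono, rule mult_left_mono)
        fix t assume t: "t \<in> {2..T}"
        have "indicator {..v} (p t) \<le> (indicator {..<b} (p t) :: real)" "indicator {..<v} (p t) \<le> (indicator {..<b} (p t) :: real)"
          using vb by (auto simp: indicator_def)
        moreover have "gS T x t a \<le> gS T x t v" using av' by (intro gS_mono) simp
        ultimately show "indicator {..v} (p t) + indicator {..<v} (p t) - 2 * gS T x t v \<le> 2 * indicator {..<b} (p t) - 2 * gS T x t a"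
          by linarith
        show "0 \<le> w t" using w01 t by auto
      qed
      also have "\<dots> = 2 * Y' p b + 2 * (G b - G a)"
        unfolding Y'b Gdiff sum_distrib_left sum.distrib[symmetric] by (intro sum.cong refl) (simp add: algebra_simps)
      finally show ?thesis unfolding YY .
    qed
    have jb: "j + 1 \<le> 2^K" using jlt by simp
    have HYb: "\<bar>Y' p b\<bar> \<le> \<bar>Y' p 0\<bar> + \<bar>Y' p 1\<bar> + Ties p + MY p"
      unfolding b_def using grid_Y'[OF jb] .
    show ?thesis using lower upper HY HYb cell2 MY_nonneg Ties_nonneg unfolding Hdef
      by (smt (verit) abs_ge_zero)
  qed
qed

end

lemma fh_cdf_01: "0 \<le> fh_cdf T x t u \<and> fh_cdf T x t u \<le> 1"
  unfolding fh_cdf_def using S_nonneg S_le1 by auto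

lemma fh_cdfm_01: "0 \<le> fh_cdfm T x t u \<and> fh_cdfm T x t u \<le> 1"
  unfolding fh_cdfm_def pwm_def gS_def using S_nonneg S_le1 by auto

context dev
begin

abbreviation "MM \<equiv> fh_measure T x"

lemma Y_meas: "(\<lambda>p. Y p u) \<in> borel_measurable MM"
  unfolding Y_def by measurable

lemma Y'_meas: "(\<lambda>p. Y' p u) \<in> borel_measurable MM"
  unfolding Y'_def by measurable

lemma Y_bnd: "\<bar>Y p u\<bar> \<le> real T"
proof -
  have "\<bar>Y p u\<bar> \<le> (\<Sum>t\<in>{2..T}. \<bar>w t * (indicator {..u} (p t) - fh_cdf T x t u)\<bar>)"
    unfolding Y_def by (rule sum_abs)
  also have "\<dots> \<le> (\<Sum>t\<in>{2..T}. 1)"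
  proof (rule sum_mono)
    fix t assume t: "t \<in> {2..T}"
    have "\<bar>indicator {..u} (p t) - fh_cdf T x t u\<bar> \<le> 1" using fh_cdf_01[of T x t u]
      by (auto simp: indicator_def)
    then show "\<bar>w t * (indicator {..u} (p t) - fh_cdf T x t u)\<bar> \<le> 1"
      using w01[OF t] by (simp add: abs_mult mult_le_one)
  qed
  also have "\<dots> \<le> real T" by simp
  finally show ?thesis .
qed

lemma Y'_bnd: "\<bar>Y' p u\<bar> \<le> real T"
proof -
  have "\<bar>Y' p u\<bar> \<le> (\<Sum>t\<in>{2..T}. \<bar>w t * (indicator {..<u} (p t) - fh_cdfm T x t u)\<bar>)"
    unfolding Y'_def by (rule sum_abs)
  also have "\<dots> \<le> (\<Sum>t\<in>{2..T}. 1)"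
  proof (rule sum_mono)
    fix t assume t: "t \<in> {2..T}"
    have "\<bar>indicator {..<u} (p t) - fh_cdfm T x t u\<bar> \<le> 1" using fh_cdfm_01[of T x t u]
      by (auto simp: indicator_def)
    then show "\<bar>w t * (indicator {..<u} (p t) - fh_cdfm T x t u)\<bar> \<le> 1"
      using w01[OF t] by (simp add: abs_mult mult_le_one)
  qed
  also have "\<dots> \<le> real T" by simp
  finally show ?thesis .
qed

lemma D_meas: "(\<lambda>p. D p k) \<in> borel_measurable MM"
  unfolding D_def Y_def by measurable

lemma D_bnd: "D p k \<le> 2^k * (2 * real T)^4"
proof -
  have "D p k \<le> (\<Sum>i\<in>{1..<(2::nat)^k}. (2 * real T)^4)"
    unfolding D_def
  proof (rule sum_mono)
    fix i
    have "\<bar>Y p (Q (real i / 2^k)) - Y p (Q (real (i - 1) / 2^k))\<bar> \<le> 2 * real T"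
      using Y_bnd[of p "Q (real i / 2^k)"] Y_bnd[of p "Q (real (i - 1) / 2^k)"] by linarith
    then have "\<bar>Y p (Q (real i / 2^k)) - Y p (Q (real (i - 1) / 2^k))\<bar>^4 \<le> (2 * real T)^4"
      by (rule power_mono) simp
    then show "(Y p (Q (real i / 2^k)) - Y p (Q (real (i - 1) / 2^k)))^4 \<le> (2 * real T)^4"
      by (simp add: power_even_abs_numeral)
  qed
  also have "\<dots> = real (2^k - 1) * (2 * real T)^4" by simp
  also have "\<dots> \<le> 2^k * (2 * real T)^4" by (intro mult_right_mono) auto
  finally show ?thesis .
qed


lemma sqsq_abs: "sqrt (sqrt (y^4)) = \<bar>y::real\<bar>"
proof -
  have "y^4 = (y^2)^2" by simp
  then have "sqrt (y^4) = y^2" by (simp only: real_sqrt_abs) simp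
  then show ?thesis by (simp add: real_sqrt_abs)
qed

lemma sqsq_4T2: "sqrt (sqrt (4 * (real T)^2)) = sqrt (2 * real T)"
proof -
  have "4 * (real T)^2 = (2 * real T)^2" by (simp add: power2_eq_square)
  then have "sqrt (4 * (real T)^2) = 2 * real T" by (simp only: real_sqrt_abs)
  then show ?thesis by simp
qed

lemma V_le: "(\<Sum>t\<in>{2..T}. w t * measure (fh_dist T x t) (A t)) \<le> real T"
proof -
  have "(\<Sum>t\<in>{2..T}. w t * measure (fh_dist T x t) (A t)) \<le> (\<Sum>t\<in>{2..T}. 1)"
  proof (rule sum_mono)
    fix t assume t: "t \<in> {2..T}"
    have "measure (fh_dist T x t) (A t) \<le> 1" using prob_space.prob_le_1[OF fh_dist_prob_space] .
    then show "w t * measure (fh_dist T x t) (A t) \<le> 1" using w01[OF t] by (simp add: mult_le_one)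
  qed
  then show ?thesis by simp
qed

lemma V_nonneg: "0 \<le> (\<Sum>t\<in>{2..T}. w t * measure (fh_dist T x t) (A t))"
  using w01 by (intro sum_nonneg mult_nonneg_nonneg) auto

lemma E_single:
  assumes A: "\<And>t. A t \<in> sets borel"
  defines "Z \<equiv> \<lambda>p. (\<Sum>t\<in>{2..T}. w t * (indicator (A t) (p t) - measure (fh_dist T x t) (A t)))"
  shows "(\<integral>p. \<bar>Z p\<bar> \<partial>MM) \<le> sqrt (2 * real T)"
proof -
  interpret prob_space MM by (rule fh_measure_prob)
  have E4: "(\<integral>p. (Z p)^4 \<partial>MM) \<le> 4 * (real T)^2"
  proof -
    have "(\<integral>p. (Z p)^4 \<partial>MM) \<le> (\<Sum>t\<in>{2..T}. w t * measure (fh_dist T x t) (A t))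
        + 3 * (\<Sum>t\<in>{2..T}. w t * measure (fh_dist T x t) (A t))^2"
      unfolding Z_def by (rule E4_indic) (use A w01 in auto)
    also have "\<dots> \<le> real T + 3 * (real T)^2"
      using V_le[of A] V_nonneg[of A] by (intro add_mono mult_left_mono power_mono) auto
    also have "\<dots> \<le> 4 * (real T)^2" using T1 by (simp add: power2_eq_square)
    finally show ?thesis .
  qed
  have Zm: "Z \<in> borel_measurable MM" unfolding Z_def using A by measurable
  have Zb: "\<bar>Z p\<bar> \<le> real T" for p
  proof -
    have "\<bar>Z p\<bar> \<le> (\<Sum>t\<in>{2..T}. \<bar>w t * (indicator (A t) (p t) - measure (fh_dist T x t) (A t))\<bar>)"
      unfolding Z_def by (rule sum_abs)
    also have "\<dots> \<le> (\<Sum>t\<in>{2..T}. 1)"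
    proof (rule sum_mono)
      fix t assume t: "t \<in> {2..T}"
      have "0 \<le> measure (fh_dist T x t) (A t)" "measure (fh_dist T x t) (A t) \<le> 1"
        using prob_space.prob_le_1[OF fh_dist_prob_space] by auto
      then have "\<bar>indicator (A t) (p t) - measure (fh_dist T x t) (A t)\<bar> \<le> 1"
        by (auto simp: indicator_def)
      then show "\<bar>w t * (indicator (A t) (p t) - measure (fh_dist T x t) (A t))\<bar> \<le> 1"
        using w01[OF t] by (simp add: abs_mult mult_le_one)
    qed
    also have "\<dots> \<le> real T" by simp
    finally show ?thesis .
  qed
  have "(\<integral>p. sqrt (sqrt ((Z p)^4)) \<partial>MM) \<le> sqrt (sqrt (4 * (real T)^2))"
  proof (rule E_root4[where K="(real T)^4"])
    show "(\<lambda>p. (Z p)^4) \<in> borel_measurable MM" using Zm by measurable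
    fix p
    show "0 \<le> (Z p)^4" by simp
    have "\<bar>Z p\<bar>^4 \<le> (real T)^4" using Zb[of p] by (intro power_mono) auto
    then show "(Z p)^4 \<le> (real T)^4" by (simp add: power_even_abs_numeral)
  qed (use E4 T1 in auto)
  then show ?thesis unfolding sqsq_abs sqsq_4T2 .
qed

lemma E_Y: "(\<integral>p. \<bar>Y p u\<bar> \<partial>MM) \<le> sqrt (2 * real T)"
proof -
  have "Y p u = (\<Sum>t\<in>{2..T}. w t * (indicator {..u} (p t) - measure (fh_dist T x t) {..u}))" for p
    unfolding Y_def measure_fh_dist_le ..
  then show ?thesis using E_single[of "\<lambda>_. {..u}"] by simp
qed

lemma E_Y': "(\<integral>p. \<bar>Y' p u\<bar> \<partial>MM) \<le> sqrt (2 * real T)"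
proof -
  have "Y' p u = (\<Sum>t\<in>{2..T}. w t * (indicator {..<u} (p t) - measure (fh_dist T x t) {..<u}))" for p
    unfolding Y'_def measure_fh_dist_less ..
  then show ?thesis using E_single[of "\<lambda>_. {..<u}"] by simp
qed


lemma cdf_diff: "a < b \<Longrightarrow> fh_cdf T x t b - fh_cdf T x t a = measure (fh_dist T x t) {a<..b}"
proof -
  assume ab: "a < b"
  interpret real_distribution "fh_dist T x t" by (rule fh_dist_real_distribution)
  have "cdf (fh_dist T x t) = fh_cdf T x t"
    unfolding fh_dist_def by (rule cdf_interval_measure) (auto simp: fh_cdf_props)
  then show ?thesis using cdf_diff_eq[OF ab] by simp
qed

lemma incr_eq:
  assumes ab: "0 \<le> a" "a < b" "b < 1"
  shows "Y p b - Y p a = (\<Sum>t\<in>{2..T}. w t * (indicator {a<..b} (p t) - measure (fh_dist T x t) {a<..b}))"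
  unfolding Y_def sum_subtractf[symmetric]
proof (rule sum.cong[OF refl])
  fix t assume t: "t \<in> {2..T}"
  have "indicator {..b} (p t) - indicator {..a} (p t) = (indicator {a<..b} (p t) :: real)"
    using ab by (auto simp: indicator_def)
  moreover have "fh_cdf T x t b - fh_cdf T x t a = measure (fh_dist T x t) {a<..b}"
    by (rule cdf_diff[OF ab(2)])
  ultimately show "w t * (indicator {..b} (p t) - fh_cdf T x t b) - w t * (indicator {..a} (p t) - fh_cdf T x t a) =
         w t * (indicator {a<..b} (p t) - measure (fh_dist T x t) {a<..b})"
    by (simp add: algebra_simps)
qed

lemma incr_V:
  assumes ab: "0 \<le> a" "a < b" "b < 1"
  shows "(\<Sum>t\<in>{2..T}. w t * measure (fh_dist T x t) {a<..b}) = G b - G a"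
  unfolding G_def sum_subtractf[symmetric]
proof (rule sum.cong[OF refl])
  fix t assume t: "t \<in> {2..T}"
  have "measure (fh_dist T x t) {a<..b} = fh_cdf T x t b - fh_cdf T x t a"
    by (rule cdf_diff[OF ab(2), symmetric])
  also have "\<dots> = gS T x t b - gS T x t a" using t ab by (simp add: F_eq_gS)
  finally have m: "measure (fh_dist T x t) {a<..b} = gS T x t b - gS T x t a" .
  show "w t * measure (fh_dist T x t) {a<..b} = w t * gS T x t b - w t * gS T x t a"
    unfolding m by (simp add: right_diff_distrib)
qed

lemma E_D:
  assumes k: "1 \<le> k" "k \<le> K"
  shows "(\<integral>p. sqrt (sqrt (D p k)) \<partial>MM) \<le> sqrt (sqrt (4 * (real T)^2 / 2^k))"
proof -
  interpret prob_space MM by (rule fh_measure_prob)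
  define Ll where "Ll = L / 2^k"
  have Llnn: "0 \<le> Ll" unfolding Ll_def using L_nonneg by simp
  have Ei: "(\<integral>p. (Y p (Q (real i / 2^k)) - Y p (Q (real (i - 1) / 2^k)))^4 \<partial>MM) \<le> Ll + 3 * Ll^2"
    if i: "i \<in> {1..<2^k}" for i
  proof -
    define a where "a = Q (real (i - 1) / 2^k)"
    define b where "b = Q (real i / 2^k)"
    have ir: "real i < 2^k" using i by (metis atLeastLessThan_iff of_nat_less_iff of_nat_numeral of_nat_power)
    have i0: "1 \<le> i" using i by simp
    have im: "real (i - 1) = real i - 1" using i0 by (simp add: of_nat_diff)
    have p2: "(0::real) < 2^k" by simp
    have i1: "0 \<le> real (i - 1) / 2^k" "real (i - 1) / 2^k \<le> 1" "real i / 2^k \<le> 1"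
      "real (i - 1) / 2^k < real i / 2^k" "real i / 2^k < 1"
    proof -
      show "0 \<le> real (i - 1) / 2^k" by simp
      have "i - 1 \<le> 2^k" using i by (simp add: le_diff_conv less_imp_le_nat trans_le_add1)
      then show "real (i - 1) / 2^k \<le> 1" using p2 by (simp add: divide_le_eq)
      show "real i / 2^k \<le> 1" using ir p2 by (simp add: divide_le_eq)
      show "real (i - 1) / 2^k < real i / 2^k" using im p2 by (simp add: divide_strict_right_mono)
      show "real i / 2^k < 1" using ir p2 by (simp add: divide_less_eq)
    qed
    have a0: "0 \<le> a" unfolding a_def using Q_prop[OF i1(1,2)] by simp
    have ab: "a < b" unfolding a_def b_def using Q_strict[OF i1(1) i1(4) i1(3) L_pos] .
    have b1: "b < 1" unfolding b_def using Q_strict[OF _ i1(5) _ L_pos] Q1 by simp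
    have Ga: "G a = G 0 + (real (i - 1) / 2^k) * L" unfolding a_def using Q_prop[OF i1(1,2)] by simp
    have Gb: "G b = G 0 + (real i / 2^k) * L" unfolding b_def using Q_prop[of "real i / 2^k"] i1 by simp
    have GbGa: "G b - G a = Ll" unfolding Ga Gb Ll_def using i by (simp add: field_simps of_nat_diff)
    have "(\<integral>p. (Y p b - Y p a)^4 \<partial>MM) \<le> (\<Sum>t\<in>{2..T}. w t * measure (fh_dist T x t) {a<..b})
        + 3 * (\<Sum>t\<in>{2..T}. w t * measure (fh_dist T x t) {a<..b})^2"
      unfolding incr_eq[OF a0 ab b1] by (rule E4_indic) (use w01 in auto)
    moreover have V: "(\<Sum>t\<in>{2..T}. w t * measure (fh_dist T x t) {a<..b}) = Ll"
      using incr_V[OF a0 ab b1] GbGa by simp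
    ultimately have "(\<integral>p. (Y p b - Y p a)^4 \<partial>MM) \<le> Ll + 3 * Ll^2" by simp
    then show ?thesis by (simp add: a_def b_def)
  qed
  have int4: "integrable MM (\<lambda>p. (Y p (Q (real i / 2^k)) - Y p (Q (real (i - 1) / 2^k)))^4)" for i
  proof (rule bnd_integrable[where B="(2 * real T)^4"])
    show "(\<lambda>p. (Y p (Q (real i / 2^k)) - Y p (Q (real (i - 1) / 2^k)))^4) \<in> borel_measurable MM"
      using Y_meas by measurable
    fix p
    have "\<bar>Y p (Q (real i / 2^k)) - Y p (Q (real (i - 1) / 2^k))\<bar> \<le> 2 * real T"
      using Y_bnd[of p "Q (real i / 2^k)"] Y_bnd[of p "Q (real (i - 1) / 2^k)"] by linarith
    then have "\<bar>Y p (Q (real i / 2^k)) - Y p (Q (real (i - 1) / 2^k))\<bar>^4 \<le> (2 * real T)^4"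
      by (rule power_mono) simp
    then show "\<bar>(Y p (Q (real i / 2^k)) - Y p (Q (real (i - 1) / 2^k)))^4\<bar> \<le> (2 * real T)^4"
      by (simp add: power_abs)
  qed
  have ED: "(\<integral>p. D p k \<partial>MM) \<le> 4 * (real T)^2 / 2^k"
  proof -
    have "(\<integral>p. D p k \<partial>MM) = (\<Sum>i\<in>{1..<(2::nat)^k}. (\<integral>p. (Y p (Q (real i / 2^k)) - Y p (Q (real (i - 1) / 2^k)))^4 \<partial>MM))"
      unfolding D_def by (rule Bochner_Integration.integral_sum) (rule int4)
    also have "\<dots> \<le> (\<Sum>i\<in>{1..<(2::nat)^k}. Ll + 3 * Ll^2)"
      by (rule sum_mono) (rule Ei)
    also have "\<dots> = real (2^k - 1) * (Ll + 3 * Ll^2)" by simp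
    also have "\<dots> \<le> 2^k * (Ll + 3 * Ll^2)" using Llnn by (intro mult_right_mono) auto
    also have "\<dots> = L + 3 * L^2 / 2^k" unfolding Ll_def by (simp add: field_simps power2_eq_square)
    also have "\<dots> \<le> real T + 3 * (real T)^2 / 2^k"
      using L_le L_nonneg by (intro add_mono divide_right_mono mult_left_mono power_mono) auto
    also have "\<dots> \<le> 4 * (real T)^2 / 2^k"
    proof -
      have "(2::real)^k \<le> 2^K" using k by (intro power_increasing) auto
      also have "\<dots> \<le> real T" using K_prop by (metis of_nat_le_iff of_nat_numeral of_nat_power)
      finally have "2^k \<le> real T" .
      then have "real T * 2^k \<le> (real T)^2" by (simp add: power2_eq_square mult_left_mono)
      then have "real T \<le> (real T)^2 / 2^k" by (simp add: field_simps)
      then show ?thesis by simp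
    qed
    finally show ?thesis .
  qed
  show ?thesis
  proof (rule E_root4[where K="2^k * (2 * real T)^4"])
    show "(\<lambda>p. D p k) \<in> borel_measurable MM" by (rule D_meas)
  qed (use ED D_nonneg D_bnd T1 in auto)
qed


lemma atom0: assumes t: "t \<noteq> 1" and u: "0 < u" "u < 1" shows "measure (fh_dist T x t) {u} = 0"
proof -
  interpret D: prob_space "fh_dist T x t" by (rule fh_dist_prob_space)
  have e: "{u} = {..u} - {..<u}" by auto
  have "measure (fh_dist T x t) {u} = measure (fh_dist T x t) ({..u} - {..<u})" unfolding e[symmetric] ..
  also have "\<dots> = measure (fh_dist T x t) {..u} - measure (fh_dist T x t) {..<u}"
    by (rule D.finite_measure_Diff) auto
  finally have "measure (fh_dist T x t) {u} = measure (fh_dist T x t) {..u} - measure (fh_dist T x t) {..<u}" .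
  also have "\<dots> = 0" unfolding measure_fh_dist_le measure_fh_dist_less
    using F_eq_gS[OF t, of u] Fm_eq_gS[OF t, of u] u by simp
  finally show ?thesis .
qed

lemma Ties_meas: "Ties \<in> borel_measurable MM"
  unfolding Ties_def by measurable

lemma Ties_bnd: "Ties p \<le> 2^K * real T"
proof -
  have "Ties p \<le> (\<Sum>i\<in>{1..<(2::nat)^K}. \<Sum>t\<in>{2..T}. (1::real))"
    unfolding Ties_def using w01 by (intro sum_mono) (auto simp: indicator_def)
  also have "\<dots> \<le> 2^K * real T"
  proof -
    have "(\<Sum>i\<in>{1..<(2::nat)^K}. \<Sum>t\<in>{2..T}. (1::real)) = real (2^K - 1) * real (T - 1)" by simp
    also have "\<dots> \<le> 2^K * real T" by (intro mult_mono) auto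
    finally show ?thesis .
  qed
  finally show ?thesis .
qed

lemma E_Ties: "(\<integral>p. Ties p \<partial>MM) = 0"
proof -
  interpret prob_space MM by (rule fh_measure_prob)
  have intind: "integrable MM (\<lambda>p. w t * indicator {u} (p t) :: real)" if "t \<in> {2..T}" for t u
    by (rule bnd_integrable[where B="\<bar>w t\<bar>"]) (use that in \<open>measurable, auto simp: indicator_def abs_mult\<close>)
  have "(\<integral>p. Ties p \<partial>MM) = (\<Sum>i\<in>{1..<(2::nat)^K}. \<Sum>t\<in>{2..T}. (\<integral>p. w t * indicator {Q (real i / 2^K)} (p t) \<partial>MM))"
  proof -
    have i1: "integrable MM (\<lambda>p. \<Sum>t\<in>{2..T}. w t * indicator {u} (p t) :: real)" for u
      by (rule Bochner_Integration.integrable_sum) (rule intind)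
    have "(\<integral>p. Ties p \<partial>MM) = (\<Sum>i\<in>{1..<(2::nat)^K}. (\<integral>p. (\<Sum>t\<in>{2..T}. w t * indicator {Q (real i / 2^K)} (p t)) \<partial>MM))"
      unfolding Ties_def by (rule Bochner_Integration.integral_sum) (rule i1)
    also have "\<dots> = (\<Sum>i\<in>{1..<(2::nat)^K}. \<Sum>t\<in>{2..T}. (\<integral>p. w t * indicator {Q (real i / 2^K)} (p t) \<partial>MM))"
      by (rule sum.cong[OF refl], rule Bochner_Integration.integral_sum) (rule intind)
    finally show ?thesis .
  qed
  also have "\<dots> = 0"
  proof (intro sum.neutral ballI)
    fix i t assume i: "i \<in> {1..<(2::nat)^K}" and t: "t \<in> {2..T}"
    have ir: "real i < 2^K" using i by (metis atLeastLessThan_iff of_nat_less_iff of_nat_numeral of_nat_power)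
    have s: "0 < real i / 2^K" "real i / 2^K < 1" using i ir by (auto simp: divide_less_eq)
    have u: "0 < Q (real i / 2^K)" "Q (real i / 2^K) < 1"
      using Q_strict[of 0 "real i / 2^K"] Q_strict[of "real i / 2^K" 1] s L_pos Q0 Q1 by auto
    have "(\<integral>p. w t * indicator {Q (real i / 2^K)} (p t) \<partial>MM)
        = (\<integral>y. w t * indicator {Q (real i / 2^K)} y \<partial>fh_dist T x t)"
      by (rule coord_integral) (use t in auto)
    also have "\<dots> = w t * measure (fh_dist T x t) {Q (real i / 2^K)}"
      by (simp add: prob_space.prob_space[OF fh_dist_prob_space])
    also have "\<dots> = 0" using atom0[of t "Q (real i / 2^K)"] t u by simp
    finally show "(\<integral>p. w t * indicator {Q (real i / 2^K)} (p t) \<partial>MM) = 0" .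
  qed
  finally show ?thesis .
qed


lemma geo_sum: "(\<Sum>k\<in>{1..K}. sqrt (sqrt (4 * (real T)^2 / 2^k))) \<le> 6 * sqrt (2 * real T)"
proof -
  define r where "r = 1 / sqrt (sqrt (2::real))"
  have r0: "0 < r" unfolding r_def by simp
  have r4: "r^4 = 1/2"
  proof -
    have "(sqrt (sqrt (2::real)))^4 = 2"
      by (metis numeral_times_numeral num_double power_mult real_sqrt_pow2 real_sqrt_ge_zero zero_le_numeral power2_eq_square)
    then show ?thesis unfolding r_def by (simp add: power_divide)
  qed
  have trm: "sqrt (sqrt (4 * (real T)^2 / 2^k)) = sqrt (2 * real T) * r^k" for k
  proof -
    have c4: "(sqrt (2 * real T) * r^k)^4 = 4 * (real T)^2 / 2^k"
    proof -
      have q: "(y::real)^4 = (y^2)^2" for y by simp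
      have "(sqrt (2 * real T))^4 = 4 * (real T)^2"
        unfolding q by (simp add: power2_eq_square)
      moreover have "(r^k)^4 = 1 / 2^k"
      proof -
        have "(r^k)^4 = (r^4)^k" by (simp add: power_mult[symmetric] mult.commute)
        then show ?thesis unfolding r4 by (simp add: power_one_over)
      qed
      ultimately show ?thesis by (simp add: power_mult_distrib)
    qed
    have "sqrt (sqrt ((sqrt (2 * real T) * r^k)^4)) = \<bar>sqrt (2 * real T) * r^k\<bar>" by (rule sqsq_abs)
    then show ?thesis unfolding c4 using r0 by simp
  qed
  have r1: "r \<le> 6/7"
  proof -
    have "(7/6::real)^4 \<le> 2" by (simp add: power_divide eval_nat_numeral)
    then have "sqrt (sqrt ((7/6::real)^4)) \<le> sqrt (sqrt 2)" by simp
    then have "7/6 \<le> sqrt (sqrt (2::real))" unfolding sqsq_abs by simp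
    then show ?thesis unfolding r_def by (simp add: divide_simps)
  qed
  have gp: "(1 - r) * (\<Sum>k\<in>{1..n}. r^k) = r - r^(n+1)" for n
  proof (induction n)
    case 0 show ?case by simp
  next
    case (Suc n)
    have "(1 - r) * (\<Sum>k\<in>{1..Suc n}. r^k) = (1 - r) * (\<Sum>k\<in>{1..n}. r^k) + (1 - r) * r^(Suc n)"
      by (simp add: distrib_left)
    also have "\<dots> = r - r^(n+1) + (1 - r) * r^(Suc n)" using Suc.IH by simp
    also have "\<dots> = r - r^(Suc n + 1)" by (simp add: algebra_simps)
    finally show ?case .
  qed
  have "(\<Sum>k\<in>{1..K}. r^k) \<le> 6"
  proof -
    have "(1 - r) * (\<Sum>k\<in>{1..K}. r^k) \<le> r" unfolding gp using r0 by simp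
    moreover have "0 < 1 - r" using r1 by simp
    ultimately have "(\<Sum>k\<in>{1..K}. r^k) \<le> r / (1 - r)" by (simp add: field_simps mult.commute)
    also have "\<dots> \<le> 6" using r1 r0 by (simp add: divide_simps)
    finally show ?thesis .
  qed
  then have "sqrt (2 * real T) * (\<Sum>k\<in>{1..K}. r^k) \<le> sqrt (2 * real T) * 6" by (intro mult_left_mono) auto
  then show ?thesis unfolding trm sum_distrib_left[symmetric] by simp
qed

lemma H_meas: "H \<in> borel_measurable MM"
  unfolding H_def MY_def using Y_meas Y'_meas D_meas Ties_meas by measurable

lemma E_H: "(\<integral>p. H p \<partial>MM) \<le> 36 * sqrt (2 * real T) + 4 \<and> integrable MM H"
proof -
  interpret prob_space MM by (rule fh_measure_prob)
  have i1: "integrable MM (\<lambda>p. \<bar>Y p u\<bar>)" for u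
    by (rule bnd_integrable[where B="real T"]) (use Y_meas Y_bnd in auto)
  have i2: "integrable MM (\<lambda>p. \<bar>Y' p u\<bar>)" for u
    by (rule bnd_integrable[where B="real T"]) (use Y'_meas Y'_bnd in auto)
  have i3: "integrable MM (\<lambda>p. sqrt (sqrt (D p k)))" for k
    by (rule bnd_integrable[where B="sqrt (sqrt (2^k * (2 * real T)^4))"]) (use D_meas D_bnd D_nonneg in auto)
  have i4: "integrable MM Ties"
    by (rule bnd_integrable[where B="2^K * real T"]) (use Ties_meas Ties_bnd Ties_nonneg in auto)
  have i5: "integrable MM (\<lambda>p. \<Sum>k\<in>{1..K}. sqrt (sqrt (D p k)))"
    by (rule Bochner_Integration.integrable_sum) (rule i3)
  have iMY: "integrable MM MY" unfolding MY_def using i1 i5 by auto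
  have iH: "integrable MM H" unfolding H_def using iMY i2 i4 by auto
  have EMY: "(\<integral>p. MY p \<partial>MM) = (\<integral>p. \<bar>Y p 0\<bar> \<partial>MM) + (\<Sum>k\<in>{1..K}. (\<integral>p. sqrt (sqrt (D p k)) \<partial>MM)) + (\<integral>p. \<bar>Y p 1\<bar> \<partial>MM)"
    unfolding MY_def using i1 i5 i3 by (simp add: Bochner_Integration.integral_sum)
  have EH: "(\<integral>p. H p \<partial>MM) = 4 * (\<integral>p. MY p \<partial>MM) + 2 * ((\<integral>p. \<bar>Y' p 0\<bar> \<partial>MM) + (\<integral>p. \<bar>Y' p 1\<bar> \<partial>MM) + (\<integral>p. Ties p \<partial>MM)) + 4"
    unfolding H_def using iMY i2 i4 by (simp add: prob_space)
  have sD: "(\<Sum>k\<in>{1..K}. (\<integral>p. sqrt (sqrt (D p k)) \<partial>MM)) \<le> 6 * sqrt (2 * real T)"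
  proof -
    have "(\<Sum>k\<in>{1..K}. (\<integral>p. sqrt (sqrt (D p k)) \<partial>MM)) \<le> (\<Sum>k\<in>{1..K}. sqrt (sqrt (4 * (real T)^2 / 2^k)))"
      by (rule sum_mono) (rule E_D, auto)
    then show ?thesis using geo_sum by linarith
  qed
  have "(\<integral>p. MY p \<partial>MM) \<le> 8 * sqrt (2 * real T)"
    unfolding EMY using E_Y[of 0] E_Y[of 1] sD by linarith
  then have a: "4 * (\<integral>p. MY p \<partial>MM) \<le> 32 * sqrt (2 * real T)" by simp
  have b: "2 * ((\<integral>p. \<bar>Y' p 0\<bar> \<partial>MM) + (\<integral>p. \<bar>Y' p 1\<bar> \<partial>MM) + 0) \<le> 4 * sqrt (2 * real T)"
    using E_Y'[of 0] E_Y'[of 1] by simp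
  have "(\<integral>p. H p \<partial>MM) \<le> 36 * sqrt (2 * real T) + 4"
    unfolding EH E_Ties using a b by simp
  then show ?thesis using iH by simp
qed

lemma H_nonneg: "0 \<le> H p"
  unfolding H_def using MY_nonneg Ties_nonneg by (intro add_nonneg_nonneg) auto

end

lemma dev_export:
  assumes T1: "1 \<le> T" and w01: "\<And>t. t \<in> {2..T} \<Longrightarrow> 0 \<le> w t \<and> w t \<le> 1"
  shows "\<exists>H. integrable (fh_measure T x) H \<and> (\<forall>p. 0 \<le> H p)
     \<and> (\<integral>p. H p \<partial>fh_measure T x) \<le> 36 * sqrt (2 * real T) + 4
     \<and> (\<forall>p v. 0 \<le> v \<longrightarrow> v \<le> 1 \<longrightarrow> \<bar>\<Sum>t\<in>{2..T}. w t * Ydev T x t p v\<bar> \<le> H p)"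
proof (cases "\<exists>t\<in>{2..T}. 0 < w t")
  case True
  interpret dev T x w using T1 w01 True by unfold_locales auto
  show ?thesis
  proof (intro exI conjI allI impI)
    show "integrable (fh_measure T x) H" using E_H by simp
    show "(\<integral>p. H p \<partial>fh_measure T x) \<le> 36 * sqrt (2 * real T) + 4" using E_H by simp
    show "0 \<le> H p" for p by (rule H_nonneg)
    fix p and v :: real assume v: "0 \<le> v" "v \<le> 1"
    have "(\<Sum>t\<in>{2..T}. w t * Ydev T x t p v) = Y p v + Y' p v"
      unfolding Y_def Y'_def Ydev_def sum.distrib[symmetric] by (simp add: algebra_simps)
    then show "\<bar>\<Sum>t\<in>{2..T}. w t * Ydev T x t p v\<bar> \<le> H p" using H_bound[OF v] by simp
  qed
next
  case False
  then have w0: "\<And>t. t \<in> {2..T} \<Longrightarrow> w t = 0" using w01 by force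
  interpret prob_space "fh_measure T x" by (rule fh_measure_prob)
  show ?thesis
  proof (intro exI[of _ "\<lambda>_. 0"] conjI allI impI)
    fix p v
    show "\<bar>\<Sum>t\<in>{2..T}. w t * Ydev T x t p v\<bar> \<le> 0" using w0 by simp
  qed (auto simp: add_nonneg_nonneg)
qed

lemma Reg_sgn:
  assumes x: "\<forall>t\<in>{1..T}. x t \<in> {0,1}" and T: "1 \<le> T"
  shows "Reg (ell_V v) T p x = (\<Sum>t=1..T. sgn (p t - v) * (v - x t)) + \<bar>\<Sum>t=1..T. (v - x t)\<bar>"
proof -
  have Tv: "(\<Sum>t=1..T. (v - x t)) = real T * (v - beta T x)"
    using T unfolding beta_def by (simp add: sum_subtractf algebra_simps)
  have "(\<Sum>t=1..T. ell_V v (beta T x) (x t)) = (\<Sum>t=1..T. sgn (beta T x - v) * (v - x t))"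
    using x by (intro sum.cong) (auto simp: ell_V_01)
  also have "\<dots> = sgn (beta T x - v) * (real T * (v - beta T x))"
    unfolding sum_distrib_left[symmetric] Tv ..
  also have "\<dots> = - \<bar>\<Sum>t=1..T. (v - x t)\<bar>"
    unfolding Tv using T by (auto simp: sgn_if abs_mult algebra_simps)
  finally have 2: "(\<Sum>t=1..T. ell_V v (beta T x) (x t)) = - \<bar>\<Sum>t=1..T. (v - x t)\<bar>" .
  have 1: "(\<Sum>t=1..T. ell_V v (p t) (x t)) = (\<Sum>t=1..T. sgn (p t - v) * (v - x t))"
    using x by (intro sum.cong) (auto simp: ell_V_01)
  show ?thesis unfolding Reg_def 1 2 by simp
qed

lemma Reg_abs:
  assumes x: "\<forall>t\<in>{1..T}. x t \<in> {0,1}" and T: "1 \<le> T" and v: "0 \<le> v" "v \<le> 1"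
  shows "\<bar>Reg (ell_V v) T p x\<bar> \<le> 2 * real T"
proof -
  have xv: "\<bar>v - x t\<bar> \<le> 1" if "t \<in> {1..T}" for t
  proof -
    have "x t = 0 \<or> x t = 1" using x that by auto
    then show ?thesis using v by auto
  qed
  have "\<bar>\<Sum>t=1..T. sgn (p t - v) * (v - x t)\<bar> \<le> (\<Sum>t=1..T. \<bar>sgn (p t - v) * (v - x t)\<bar>)" by (rule sum_abs)
  also have "\<dots> \<le> (\<Sum>t=1..T. 1)"
  proof (rule sum_mono)
    fix t assume "t \<in> {1..T}"
    then have "\<bar>v - x t\<bar> \<le> 1" by (rule xv)
    moreover have "\<bar>sgn (p t - v)\<bar> \<le> (1::real)" by (simp add: abs_sgn_eq)
    ultimately show "\<bar>sgn (p t - v) * (v - x t)\<bar> \<le> 1" unfolding abs_mult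
      by (metis abs_ge_zero mult_le_one)
  qed
  finally have a: "\<bar>\<Sum>t=1..T. sgn (p t - v) * (v - x t)\<bar> \<le> real T" by simp
  have "\<bar>\<Sum>t=1..T. (v - x t)\<bar> \<le> (\<Sum>t=1..T. \<bar>v - x t\<bar>)" by (rule sum_abs)
  also have "\<dots> \<le> (\<Sum>t=1..T. 1)" by (rule sum_mono) (rule xv)
  finally have b: "\<bar>\<Sum>t=1..T. (v - x t)\<bar> \<le> real T" by simp
  show ?thesis unfolding Reg_sgn[OF x T] using a b by linarith
qed


lemma sup_dense:
  assumes x: "\<forall>t\<in>{1..T}. x t \<in> {0,1}" and T: "1 \<le> T" and v: "0 \<le> v" "v \<le> 1" and e: "0 < e"
  shows "\<exists>r\<in>{0..1} \<inter> \<rat>. Reg (ell_V v) T p x - e \<le> Reg (ell_V r) T p x"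
proof -
  define f where "f r = Reg (ell_V r) T p x" for r
  have f_eq: "f r = (\<Sum>t=1..T. sgn (p t - r) * (r - x t)) + \<bar>\<Sum>t=1..T. (r - x t)\<bar>" for r
    unfolding f_def by (rule Reg_sgn[OF x T])
  consider "v = 0" | "v = 1" | "0 < v" "v < 1" using v by linarith
  then show ?thesis
  proof cases
    case 1 then show ?thesis using e by (intro bexI[of _ 0]) auto
  next
    case 2 then show ?thesis using e by (intro bexI[of _ 1]) auto
  next
    case 3
    obtain d where d: "0 < d" "\<forall>y\<in>(\<lambda>t. p t) ` {1..T}. y \<noteq> v \<longrightarrow> d \<le> dist v y"
      using finite_set_avoid[of "(\<lambda>t. p t) ` {1..T}" v] by auto
    have far: "d \<le> \<bar>p t - v\<bar>" if "t \<in> {1..T}" "p t \<noteq> v" for t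
      using d(2) that by (auto simp: dist_real_def abs_minus_commute)
    define sp where "sp t = (if p t = v then -1 else sgn (p t - v))" for t
    define sm where "sm t = (if p t = v then 1 else sgn (p t - v))" for t
    define hp where "hp r = (\<Sum>t=1..T. sp t * (r - x t)) + \<bar>\<Sum>t=1..T. (r - x t)\<bar>" for r
    define hm where "hm r = (\<Sum>t=1..T. sm t * (r - x t)) + \<bar>\<Sum>t=1..T. (r - x t)\<bar>" for r
    have avg: "f v = (hp v + hm v) / 2"
    proof -
      have "(\<Sum>t=1..T. sgn (p t - v) * (v - x t)) = ((\<Sum>t=1..T. sp t * (v - x t)) + (\<Sum>t=1..T. sm t * (v - x t))) / 2"
        unfolding sum.distrib[symmetric] sum_divide_distrib by (intro sum.cong) (auto simp: sp_def sm_def algebra_simps)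
      then show ?thesis unfolding f_eq hp_def hm_def by simp
    qed
    have sabs: "\<bar>sp t\<bar> \<le> 1" "\<bar>sm t\<bar> \<le> 1" for t unfolding sp_def sm_def by (auto simp: abs_sgn_eq)
    have Asum: "(\<Sum>t=1..T. (r - x t)) - (\<Sum>t=1..T. (v - x t)) = real T * (r - v)" for r
      by (simp add: sum_subtractf[symmetric] algebra_simps)
    have lip: "\<bar>(\<Sum>t=1..T. s t * (r - x t)) - (\<Sum>t=1..T. s t * (v - x t))\<bar> \<le> real T * \<bar>r - v\<bar>"
      if s: "\<And>t. \<bar>s t\<bar> \<le> 1" for s r
    proof -
      have "\<bar>(\<Sum>t=1..T. s t * (r - x t)) - (\<Sum>t=1..T. s t * (v - x t))\<bar> = \<bar>\<Sum>t=1..T. s t * (r - v)\<bar>"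
        unfolding sum_subtractf[symmetric] by (simp add: algebra_simps)
      also have "\<dots> \<le> (\<Sum>t=1..T. \<bar>s t * (r - v)\<bar>)" by (rule sum_abs)
      also have "\<dots> \<le> (\<Sum>t=1..T. \<bar>r - v\<bar>)"
        by (rule sum_mono) (use s in \<open>auto simp: abs_mult intro: mult_left_le_one_le\<close>)
      finally show ?thesis by simp
    qed
    have lipA: "\<bar>\<bar>\<Sum>t=1..T. (r - x t)\<bar> - \<bar>\<Sum>t=1..T. (v - x t)\<bar>\<bar> \<le> real T * \<bar>r - v\<bar>" for r
    proof -
      have "\<bar>\<bar>\<Sum>t=1..T. (r - x t)\<bar> - \<bar>\<Sum>t=1..T. (v - x t)\<bar>\<bar> \<le> \<bar>(\<Sum>t=1..T. (r - x t)) - (\<Sum>t=1..T. (v - x t))\<bar>"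
        by (rule abs_triangle_ineq3)
      also have "\<dots> = real T * \<bar>r - v\<bar>" unfolding Asum by (simp add: abs_mult)
      finally show ?thesis .
    qed
    have hp_lip: "hp v - 2 * real T * \<bar>r - v\<bar> \<le> hp r" for r
      using lip[of sp r, OF sabs(1)] lipA[of r] unfolding hp_def by linarith
    have hm_lip: "hm v - 2 * real T * \<bar>r - v\<bar> \<le> hm r" for r
      using lip[of sm r, OF sabs(2)] lipA[of r] unfolding hm_def by linarith
    have right: "f r = hp r" if r: "v < r" "r < v + d" for r
      unfolding f_eq hp_def
    proof (intro arg_cong2[where f="(+)"] refl sum.cong arg_cong2[where f="(*)"])
      fix t assume t: "t \<in> {1..T}"
      show "sgn (p t - r) = sp t"
      proof (cases "p t = v")
        case True then show ?thesis using r by (simp add: sp_def sgn_if)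
      next
        case False
        then have "d \<le> \<bar>p t - v\<bar>" using far t by simp
        then show ?thesis using r False by (auto simp: sp_def sgn_if)
      qed
    qed
    have left: "f r = hm r" if r: "v - d < r" "r < v" for r
      unfolding f_eq hm_def
    proof (intro arg_cong2[where f="(+)"] refl sum.cong arg_cong2[where f="(*)"])
      fix t assume t: "t \<in> {1..T}"
      show "sgn (p t - r) = sm t"
      proof (cases "p t = v")
        case True then show ?thesis using r by (simp add: sm_def sgn_if)
      next
        case False
        then have "d \<le> \<bar>p t - v\<bar>" using far t by simp
        then show ?thesis using r False by (auto simp: sm_def sgn_if)
      qed
    qed
    have Tp: "0 < 2 * real T" using T by simp
    define \<delta> where "\<delta> = min d (min (min v (1 - v)) (e / (2 * real T)))"
    have \<delta>: "0 < \<delta>" "\<delta> \<le> d" "\<delta> \<le> v" "\<delta> \<le> 1 - v" "2 * real T * \<delta> \<le> e"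
    proof -
      show "0 < \<delta>" unfolding \<delta>_def using d 3 e Tp by simp
      show "\<delta> \<le> d" unfolding \<delta>_def by simp
      have m: "\<delta> \<le> min v (1 - v)" "\<delta> \<le> e / (2 * real T)" unfolding \<delta>_def by auto
      then show "\<delta> \<le> v" "\<delta> \<le> 1 - v" by auto
      show "2 * real T * \<delta> \<le> e" using m(2) Tp by (simp add: pos_le_divide_eq mult.commute)
    qed
    show ?thesis
    proof (cases "f v \<le> hp v")
      case True
      obtain r where r: "r \<in> \<rat>" "v < r" "r < v + \<delta>" using Rats_dense_in_real[of v "v + \<delta>"] \<delta> by auto
      have "f v - e \<le> hp v - 2 * real T * \<bar>r - v\<bar>"
      proof -
        have "2 * real T * \<bar>r - v\<bar> \<le> 2 * real T * \<delta>" using r Tp by (intro mult_left_mono) auto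
        then show ?thesis using True \<delta> by linarith
      qed
      also have "\<dots> \<le> f r" using hp_lip[of r] right[of r] r \<delta> by simp
      finally show ?thesis using r \<delta> 3 unfolding f_def by (intro bexI[of _ r]) auto
    next
      case False
      moreover have "2 * f v = hp v + hm v" using avg by simp
      ultimately have hm: "f v \<le> hm v" by linarith
      obtain r where r: "r \<in> \<rat>" "v - \<delta> < r" "r < v" using Rats_dense_in_real[of "v - \<delta>" v] \<delta> by auto
      have "f v - e \<le> hm v - 2 * real T * \<bar>r - v\<bar>"
      proof -
        have "2 * real T * \<bar>r - v\<bar> \<le> 2 * real T * \<delta>" using r Tp by (intro mult_left_mono) auto
        then show ?thesis using hm \<delta> by linarith
      qed
      also have "\<dots> \<le> f r" using hm_lip[of r] left[of r] r \<delta> by simp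
      finally show ?thesis using r \<delta> 3 unfolding f_def by (intro bexI[of _ r]) auto
    qed
  qed
qed


lemma Ydev_abs: "\<bar>Ydev T x t p v\<bar> \<le> 2"
proof -
  have "\<bar>indicator {..v} (p t) - fh_cdf T x t v\<bar> \<le> 1" using fh_cdf_01[of T x t v] by (auto simp: indicator_def)
  moreover have "\<bar>indicator {..<v} (p t) - fh_cdfm T x t v\<bar> \<le> 1" using fh_cdfm_01[of T x t v] by (auto simp: indicator_def)
  ultimately show ?thesis unfolding Ydev_def by linarith
qed

context
  fixes T :: nat and x :: "nat \<Rightarrow> real"
  assumes T: "1 \<le> T" and x: "\<forall>t\<in>{1..T}. x t \<in> {0,1}"
begin

lemma Reg_bdd: "bdd_above ((\<lambda>r. Reg (ell_V r) T p x) ` A)" if "A \<subseteq> {0..1}"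
  using Reg_abs[OF x T] that by (intro bdd_aboveI[where M="2 * real T"]) (auto simp: abs_le_iff)

lemma VCal_eq: "VCal T p x = (SUP r\<in>{0..1} \<inter> \<rat>. Reg (ell_V r) T p x)"
proof (rule antisym)
  have "(0::real) \<in> {0..1} \<inter> \<rat>" by simp
  then have ne: "{0..1::real} \<inter> \<rat> \<noteq> {}" by blast
  show "VCal T p x \<le> (SUP r\<in>{0..1} \<inter> \<rat>. Reg (ell_V r) T p x)"
    unfolding VCal_def
  proof (rule cSUP_least)
    show "{0..1::real} \<noteq> {}" by simp
    fix v :: real assume v: "v \<in> {0..1}"
    show "Reg (ell_V v) T p x \<le> (SUP r\<in>{0..1} \<inter> \<rat>. Reg (ell_V r) T p x)"
    proof (rule field_le_epsilon)
      fix e :: real assume e: "0 < e"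
      obtain r where r: "r \<in> {0..1} \<inter> \<rat>" "Reg (ell_V v) T p x - e \<le> Reg (ell_V r) T p x"
        using sup_dense[OF x T _ _ e, of v p] v by auto
      have "Reg (ell_V r) T p x \<le> (SUP r\<in>{0..1} \<inter> \<rat>. Reg (ell_V r) T p x)"
        by (rule cSUP_upper[OF r(1)]) (rule Reg_bdd, auto)
      then show "Reg (ell_V v) T p x \<le> (SUP r\<in>{0..1} \<inter> \<rat>. Reg (ell_V r) T p x) + e"
        using r(2) by linarith
    qed
  qed
  show "(SUP r\<in>{0..1} \<inter> \<rat>. Reg (ell_V r) T p x) \<le> VCal T p x"
    unfolding VCal_def by (rule cSUP_subset_mono[OF ne]) (auto intro: Reg_bdd)
qed

lemma VCal_meas: "(\<lambda>p. VCal T p x) \<in> borel_measurable (fh_measure T x)"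
proof -
  have c: "countable ({0..1::real} \<inter> \<rat>)" using countable_rat by (rule countable_subset[rotated]) auto
  have m: "(\<lambda>p. Reg (ell_V r) T p x) \<in> borel_measurable (fh_measure T x)" for r
    unfolding Reg_def ell_V_def by measurable
  have "(\<lambda>p. SUP r\<in>{0..1} \<inter> \<rat>. Reg (ell_V r) T p x) \<in> borel_measurable (fh_measure T x)"
    by (rule borel_measurable_cSUP[OF c m]) (rule Reg_bdd, auto)
  then show ?thesis unfolding VCal_eq .
qed

lemma VCal_abs: "\<bar>VCal T p x\<bar> \<le> 2 * real T"
proof -
  have "VCal T p x \<le> 2 * real T" unfolding VCal_def
    by (rule cSUP_least) (use Reg_abs[OF x T] in \<open>auto simp: abs_le_iff\<close>)
  moreover have "Reg (ell_V 0) T p x \<le> VCal T p x" unfolding VCal_def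
    by (rule cSUP_upper) (auto intro: Reg_bdd)
  moreover have "- (2 * real T) \<le> Reg (ell_V 0) T p x" using Reg_abs[OF x T, of 0 p] by auto
  ultimately show ?thesis by linarith
qed

lemma VCal_le:
  assumes H1: "\<And>v. 0 \<le> v \<Longrightarrow> v \<le> 1 \<Longrightarrow> \<bar>\<Sum>t\<in>{2..T}. 1 * Ydev T x t p v\<bar> \<le> H1"
    and Hx: "\<And>v. 0 \<le> v \<Longrightarrow> v \<le> 1 \<Longrightarrow> \<bar>\<Sum>t\<in>{2..T}. x t * Ydev T x t p v\<bar> \<le> Hx"
  shows "VCal T p x \<le> 4 + 2 * sqrt (real T) + H1 + Hx"
  unfolding VCal_def
proof (rule cSUP_least)
  show "{0..1::real} \<noteq> {}" by simp
  fix v :: real assume v: "v \<in> {0..1}"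
  then have v01: "0 \<le> v" "v \<le> 1" by auto
  have split: "(\<Sum>t=1..T. f t) = f 1 + (\<Sum>t=2..T. f t)" for f :: "nat \<Rightarrow> real"
    using T by (metis Suc_1 sum.atLeast_Suc_atMost)
  have "x 1 \<in> {0,1}" using x T by auto
  then have x1: "\<bar>v - x 1\<bar> \<le> 1" using v01 by auto
  have t1: "\<bar>(v - x 1) * Ydev T x 1 p v\<bar> \<le> 1 * 2"
    unfolding abs_mult using x1 Ydev_abs[of T x 1 p v] by (intro mult_mono) auto
  have eq2: "(\<Sum>t=2..T. (v - x t) * Ydev T x t p v) = v * (\<Sum>t\<in>{2..T}. 1 * Ydev T x t p v) - (\<Sum>t\<in>{2..T}. x t * Ydev T x t p v)"
    by (simp add: sum_distrib_left sum_subtractf[symmetric] algebra_simps)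
  have "\<bar>v * (\<Sum>t\<in>{2..T}. 1 * Ydev T x t p v)\<bar> \<le> 1 * H1"
    unfolding abs_mult using v01 H1[OF v01] by (intro mult_mono) auto
  then have t2: "\<bar>\<Sum>t=2..T. (v - x t) * Ydev T x t p v\<bar> \<le> H1 + Hx"
    unfolding eq2 using Hx[OF v01] by linarith
  have "Reg (ell_V v) T p x = gfun T x v - ((v - x 1) * Ydev T x 1 p v + (\<Sum>t=2..T. (v - x t) * Ydev T x t p v))"
    unfolding Reg_decomp[OF T x] split ..
  moreover have "gfun T x v \<le> 2 + 2 * sqrt (real T)" using gfun_bound[OF T x v01] .
  ultimately show "Reg (ell_V v) T p x \<le> 4 + 2 * sqrt (real T) + H1 + Hx"
    using t1 t2 by linarith
qed

end

theorem theorem4p7: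
  shows "\<exists>C::real. \<forall>(T::nat) (x::nat \<Rightarrow> real).
           T \<ge> 1 \<longrightarrow> (\<forall>t\<in>{1..T}. x t \<in> {0, 1}) \<longrightarrow>
           integrable (fh_measure T x) (\<lambda>p. VCal T p x) \<and>
           (\<integral>p. VCal T p x \<partial>fh_measure T x) \<le> C * sqrt (real T)"
proof (intro exI[of _ 122] allI impI)
  fix T :: nat and x :: "nat \<Rightarrow> real"
  assume T: "T \<ge> 1" and x: "\<forall>t\<in>{1..T}. x t \<in> {0, 1}"
  interpret prob_space "fh_measure T x" by (rule fh_measure_prob)
  obtain H1 where H1: "integrable (fh_measure T x) H1" "\<forall>p. 0 \<le> H1 p"
     "(\<integral>p. H1 p \<partial>fh_measure T x) \<le> 36 * sqrt (2 * real T) + 4"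
     "\<forall>p v. 0 \<le> v \<longrightarrow> v \<le> 1 \<longrightarrow> \<bar>\<Sum>t\<in>{2..T}. 1 * Ydev T x t p v\<bar> \<le> H1 p"
    using dev_export[OF T, of "\<lambda>_. 1" x] by auto
  have xw: "0 \<le> x t \<and> x t \<le> 1" if "t \<in> {2..T}" for t
  proof -
    have "x t \<in> {0,1}" using x that by auto
    then show ?thesis by auto
  qed
  obtain Hx where Hx: "integrable (fh_measure T x) Hx" "\<forall>p. 0 \<le> Hx p"
     "(\<integral>p. Hx p \<partial>fh_measure T x) \<le> 36 * sqrt (2 * real T) + 4"
     "\<forall>p v. 0 \<le> v \<longrightarrow> v \<le> 1 \<longrightarrow> \<bar>\<Sum>t\<in>{2..T}. x t * Ydev T x t p v\<bar> \<le> Hx p"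
    using dev_export[OF T, of x x] xw by blast
  have iV: "integrable (fh_measure T x) (\<lambda>p. VCal T p x)"
    by (rule bnd_integrable[where B="2 * real T"]) (use VCal_meas[OF T x] VCal_abs[OF T x] in auto)
  have pw: "VCal T p x \<le> 4 + 2 * sqrt (real T) + H1 p + Hx p" for p
    by (rule VCal_le[OF T x]) (use H1(4) Hx(4) in auto)
  have iB: "integrable (fh_measure T x) (\<lambda>p. 4 + 2 * sqrt (real T) + H1 p + Hx p)"
    using H1(1) Hx(1) by auto
  have "(\<integral>p. VCal T p x \<partial>fh_measure T x) \<le> (\<integral>p. 4 + 2 * sqrt (real T) + H1 p + Hx p \<partial>fh_measure T x)"
    by (rule integral_mono[OF iV iB]) (rule pw)
  also have "\<dots> = 4 + 2 * sqrt (real T) + (\<integral>p. H1 p \<partial>fh_measure T x) + (\<integral>p. Hx p \<partial>fh_measure T x)"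
    using H1(1) Hx(1) by (simp add: prob_space)
  also have "\<dots> \<le> 4 + 2 * sqrt (real T) + 2 * (36 * sqrt (2 * real T) + 4)"
    using add_mono[OF H1(3) Hx(3)] by simp
  also have "\<dots> \<le> 122 * sqrt (real T)"
  proof -
    have sT: "1 \<le> sqrt (real T)" using T by simp
    have s2: "sqrt (2::real) \<le> 3/2"
      by (rule real_le_lsqrt) (auto simp: power2_eq_square)
    have "sqrt (2 * real T) = sqrt 2 * sqrt (real T)" by (simp add: real_sqrt_mult)
    also have "\<dots> \<le> 3/2 * sqrt (real T)" using s2 by (intro mult_right_mono) auto
    finally have "sqrt (2 * real T) \<le> 3/2 * sqrt (real T)" .
    then have a: "72 * sqrt (2 * real T) \<le> 108 * sqrt (real T)" by simp
    have b: "4 + 2 * sqrt (real T) + 2 * (36 * sqrt (2 * real T) + 4) = 12 + 2 * sqrt (real T) + 72 * sqrt (2 * real T)"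
      by (simp add: algebra_simps)
    show ?thesis unfolding b using a sT by linarith
  qed
  finally show "integrable (fh_measure T x) (\<lambda>p. VCal T p x) \<and>
           (\<integral>p. VCal T p x \<partial>fh_measure T x) \<le> 122 * sqrt (real T)" using iV by simp
qed


end
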